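(* Let $n,m\ge3$ be integers. If $Q_1\in\mathfrak{C}^0_{(m)}$ and $Q_2\in\mathfrak{C}^0_{(n)}$, then $Q_1Q_2\in\mathfrak{C}^0_{(n)}$ and $\|Q_1Q_2;\mathfrak{C}^0_{(n)}\|\le C\|Q_1;\mathfrak{C}^0_{(m)}\|\cdot\|Q_2;\mathfrak{C}^0_{(n)}\|$. If $Q_1\in\mathfrak{C}^{0,\alpha}_{(m)}$ and $Q_2\in\mathfrak{C}^{0,\alpha}_{(n)}$, then $Q_1Q_2\in\mathfrak{C}^{0,\alpha}_{(n)}$ and $\|Q_1Q_2;\mathfrak{C}^{0,\alpha}_{(n)}\|\le C\|Q_1;\mathfrak{C}^{0,\alpha}_{(m)}\|\cdot\|Q_2;\mathfrak{C}^{0,\alpha}_{(n)}\|$. Here $C$ is a constant independent of $Q_1,Q_2$.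
   Context: Fix $\mathsf{a}>0$, $\Xi_0>0$, $R_0=\mathsf{a}\Xi_0$, and $\alpha\in(0,1)$. For integer $n\ge3$ and $\Xi>0$, $B^{(n)}(\Xi)$ is the open ball of radius $\Xi$ in $\mathbb{R}^n$. For $f$ on $\bar B^{(n)}(\Xi)$: $\|f;C^0\|=\sup|f|$ and $\|f;C^{0,\alpha}\|=\sup|f|+\sup\{|f(\xi')-f(\xi)|/|\xi'-\xi|^\alpha:\ \xi,\xi'\in\bar B^{(n)}(\Xi),\ 0<|\xi'-\xi|\le1\}$. For a function $Q$ of $(\varpi,z)$, $\varpi\ge0$, set $Q^{\flat(n)}(\xi)=Q(\mathsf{a}\sqrt{\xi_1^2+\dots+\xi_{n-1}^2},\mathsf{a}\xi_n)$, and $r=\sqrt{\varpi^2+z^2}$. Kelvin transform: $\xi^\star=(\Xi_0/|\xi|)^2\xi$, $f_{\star(n)}(\xi^\star)=(|\xi|/\Xi_0)^{n-2}f(\xi)$. $\mathfrak{C}^{0}(\bar{\mathfrak{D}}(R))$ (resp. $\mathfrak{C}^{0,\alpha}(\bar{\mathfrak{D}}(R))$): continuous $Q$ on $\{r\le R\}$, even in $z$, with $Q^{\flat(n)}\in C^0(\bar B^{(n)}(R/\mathsf{a}))$ (resp. $C^{0,\alpha}$), norm that of $Q^{\flat(n)}$ (independent of $n$). $\mathfrak{C}^0_{(n)}(\overline{\mathfrak{D}^{c}}(R_0))$ (resp. $\mathfrak{C}^{0,\alpha}_{(n)}(\overline{\mathfrak{D}^{c}}(R_0))$): $Q$ on $\{r\ge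 R_0\}$, even in $z$, such that $(Q^{\flat(n)})_{\star(n)}$ on $\bar B^{(n)}(\Xi_0)\setminus\{0\}$ is the restriction of some $F\in C^0(\bar B^{(n)}(\Xi_0))$ (resp. $C^{0,\alpha}$); norm that of $F$. Cut-off $\chi\in C^\infty(\mathbb{R})$ with $\chi(t)=1$ for $t\le1$, $0<\chi<1$ on $(1,2)$, $\chi(t)=0$ for $t\ge2$; $Q^{[0]}=\chi(r/R_0)Q$, $Q^{[\infty]}=(1-\chi(r/R_0))Q$. $\mathfrak{C}^0_{(n)}$ (resp. $\mathfrak{C}^{0,\alpha}_{(n)}$): $Q$ even in $z$ with $Q^{[0]}\in\mathfrak{C}^0(\bar{\mathfrak{D}}(2R_0))$ and $Q^{[\infty]}\in\mathfrak{C}^0_{(n)}(\overline{\mathfrak{D}^c}(R_0))$ (resp. with $0,\alpha$), norm the maximum of the two norms. *)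

theory Defs
  imports "HOL-Analysis.Analysis"
begin

text \<open>Points of R^n are represented as functions nat => real vanishing at indices >= n;
  coordinate xi_k of the paper (k = 1..n) is index k-1.\<close>

definition enorm :: "nat \<Rightarrow> (nat \<Rightarrow> real) \<Rightarrow> real" where
  "enorm n \<xi> = sqrt (\<Sum>i<n. (\<xi> i)\<^sup>2)"

definition edist :: "nat \<Rightarrow> (nat \<Rightarrow> real) \<Rightarrow> (nat \<Rightarrow> real) \<Rightarrow> real" where
  "edist n \<xi> \<eta> = enorm n (\<lambda>i. \<xi> i - \<eta> i)"

definition cballn :: "nat \<Rightarrow> real \<Rightarrow> (nat \<Rightarrow> real) set" where
  "cballn n \<Xi> = {\<xi>. (\<forall>i\<ge>n. \<xi> i = 0) \<and> enorm n \<xi> \<le> \<Xi>}"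

definition contn_on :: "nat \<Rightarrow> (nat \<Rightarrow> real) set \<Rightarrow> ((nat \<Rightarrow> real) \<Rightarrow> real) \<Rightarrow> bool" where
  "contn_on n S f \<longleftrightarrow> (\<forall>x\<in>S. \<forall>e>0. \<exists>d>0. \<forall>y\<in>S. edist n y x < d \<longrightarrow> \<bar>f y - f x\<bar> < e)"

definition holder_quots :: "real \<Rightarrow> nat \<Rightarrow> real \<Rightarrow> ((nat \<Rightarrow> real) \<Rightarrow> real) \<Rightarrow> real set" where
  "holder_quots \<alpha> n \<Xi> f = {\<bar>f \<xi>' - f \<xi>\<bar> / (edist n \<xi>' \<xi>) powr \<alpha> | \<xi> \<xi>'.
      \<xi> \<in> cballn n \<Xi> \<and> \<xi>' \<in> cballn n \<Xi> \<and> 0 < edist n \<xi>' \<xi> \<and> edist n \<xi>' \<xi> \<le> 1}"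

text \<open>Function spaces on the closed ball: None = C^0, Some alpha = C^{0,alpha}.\<close>
definition inC :: "real option \<Rightarrow> nat \<Rightarrow> real \<Rightarrow> ((nat \<Rightarrow> real) \<Rightarrow> real) \<Rightarrow> bool" where
  "inC k n \<Xi> f \<longleftrightarrow> contn_on n (cballn n \<Xi>) f \<and>
     (case k of None \<Rightarrow> True | Some \<alpha> \<Rightarrow> bdd_above (holder_quots \<alpha> n \<Xi> f))"

definition normC :: "real option \<Rightarrow> nat \<Rightarrow> real \<Rightarrow> ((nat \<Rightarrow> real) \<Rightarrow> real) \<Rightarrow> real" where
  "normC k n \<Xi> f = (SUP \<xi>\<in>cballn n \<Xi>. \<bar>f \<xi>\<bar>) +
     (case k of None \<Rightarrow> 0 | Some \<alpha> \<Rightarrow> Sup (holder_quots \<alpha> n \<Xi> f))"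

definition flat :: "real \<Rightarrow> nat \<Rightarrow> (real \<Rightarrow> real \<Rightarrow> real) \<Rightarrow> (nat \<Rightarrow> real) \<Rightarrow> real" where
  "flat a n Q \<xi> = Q (a * sqrt (\<Sum>i<n-1. (\<xi> i)\<^sup>2)) (a * \<xi> (n-1))"

text \<open>Kelvin transform: f_*(eta) = (Xi0/|eta|)^(n-2) f(eta^*), since |eta^*| = Xi0^2/|eta|.\<close>
definition kelvin :: "real \<Rightarrow> nat \<Rightarrow> ((nat \<Rightarrow> real) \<Rightarrow> real) \<Rightarrow> (nat \<Rightarrow> real) \<Rightarrow> real" where
  "kelvin \<Xi>0 n f \<eta> = (\<Xi>0 / enorm n \<eta>) ^ (n - 2) * f (\<lambda>i. (\<Xi>0 / enorm n \<eta>)\<^sup>2 * \<eta> i)"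

definition rr :: "real \<Rightarrow> real \<Rightarrow> real" where
  "rr w z = sqrt (w\<^sup>2 + z\<^sup>2)"

definition int_space :: "real option \<Rightarrow> real \<Rightarrow> nat \<Rightarrow> real \<Rightarrow> (real \<Rightarrow> real \<Rightarrow> real) \<Rightarrow> bool" where
  "int_space k a n R Q \<longleftrightarrow>
     (\<forall>w z. w \<ge> 0 \<and> rr w z \<le> R \<longrightarrow> Q w (-z) = Q w z) \<and>
     continuous_on {(w, z). w \<ge> 0 \<and> rr w z \<le> R} (\<lambda>(w, z). Q w z) \<and>
     inC k n (R / a) (flat a n Q)"

definition int_norm :: "real option \<Rightarrow> real \<Rightarrow> nat \<Rightarrow> real \<Rightarrow> (real \<Rightarrow> real \<Rightarrow> real) \<Rightarrow> real" where
  "int_norm k a n R Q = normC k n (R / a) (flat a n Q)"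

definition ext_extends :: "real option \<Rightarrow> real \<Rightarrow> real \<Rightarrow> nat \<Rightarrow> (real \<Rightarrow> real \<Rightarrow> real)
    \<Rightarrow> ((nat \<Rightarrow> real) \<Rightarrow> real) \<Rightarrow> bool" where
  "ext_extends k a \<Xi>0 n Q F \<longleftrightarrow> inC k n \<Xi>0 F \<and>
     (\<forall>\<eta>\<in>cballn n \<Xi>0. enorm n \<eta> \<noteq> 0 \<longrightarrow> F \<eta> = kelvin \<Xi>0 n (flat a n Q) \<eta>)"

definition ext_space :: "real option \<Rightarrow> real \<Rightarrow> real \<Rightarrow> nat \<Rightarrow> (real \<Rightarrow> real \<Rightarrow> real) \<Rightarrow> bool" where
  "ext_space k a \<Xi>0 n Q \<longleftrightarrow>
     (\<forall>w z. w \<ge> 0 \<and> rr w z \<ge> a * \<Xi>0 \<longrightarrow> Q w (-z) = Q w z) \<and>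
     (\<exists>F. ext_extends k a \<Xi>0 n Q F)"

definition ext_norm :: "real option \<Rightarrow> real \<Rightarrow> real \<Rightarrow> nat \<Rightarrow> (real \<Rightarrow> real \<Rightarrow> real) \<Rightarrow> real" where
  "ext_norm k a \<Xi>0 n Q = normC k n \<Xi>0 (SOME F. ext_extends k a \<Xi>0 n Q F)"

definition cut0 :: "(real \<Rightarrow> real) \<Rightarrow> real \<Rightarrow> (real \<Rightarrow> real \<Rightarrow> real) \<Rightarrow> real \<Rightarrow> real \<Rightarrow> real" where
  "cut0 chi R0 Q w z = chi (rr w z / R0) * Q w z"

definition cutinf :: "(real \<Rightarrow> real) \<Rightarrow> real \<Rightarrow> (real \<Rightarrow> real \<Rightarrow> real) \<Rightarrow> real \<Rightarrow> real \<Rightarrow> real" where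
  "cutinf chi R0 Q w z = (1 - chi (rr w z / R0)) * Q w z"

definition glob_space :: "real option \<Rightarrow> real \<Rightarrow> real \<Rightarrow> (real \<Rightarrow> real) \<Rightarrow> nat \<Rightarrow> (real \<Rightarrow> real \<Rightarrow> real) \<Rightarrow> bool" where
  "glob_space k a \<Xi>0 chi n Q \<longleftrightarrow>
     (\<forall>w z. w \<ge> 0 \<longrightarrow> Q w (-z) = Q w z) \<and>
     int_space k a n (2 * (a * \<Xi>0)) (cut0 chi (a * \<Xi>0) Q) \<and>
     ext_space k a \<Xi>0 n (cutinf chi (a * \<Xi>0) Q)"

definition glob_norm :: "real option \<Rightarrow> real \<Rightarrow> real \<Rightarrow> (real \<Rightarrow> real) \<Rightarrow> nat \<Rightarrow> (real \<Rightarrow> real \<Rightarrow> real) \<Rightarrow> real" where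
  "glob_norm k a \<Xi>0 chi n Q =
     max (int_norm k a n (2 * (a * \<Xi>0)) (cut0 chi (a * \<Xi>0) Q))
         (ext_norm k a \<Xi>0 n (cutinf chi (a * \<Xi>0) Q))"

definition smooth_real :: "(real \<Rightarrow> real) \<Rightarrow> bool" where
  "smooth_real f \<longleftrightarrow> (\<forall>j x. ((deriv ^^ j) f) differentiable (at x))"

definition cutoff :: "(real \<Rightarrow> real) \<Rightarrow> bool" where
  "cutoff chi \<longleftrightarrow> smooth_real chi \<and> (\<forall>t\<le>1. chi t = 1) \<and>
     (\<forall>t. 1 < t \<and> t < 2 \<longrightarrow> 0 < chi t \<and> chi t < 1) \<and> (\<forall>t\<ge>2. chi t = 0)"

end

theory Submission
  imports Defs
begin

lemma enorm_L2: "enorm n x = L2_set x {..<n}"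
  by (simp add: enorm_def L2_set_def)

lemma edist_L2: "edist n x y = L2_set (\<lambda>i. x i - y i) {..<n}"
  by (simp add: edist_def enorm_L2)

lemma cont_edist_fun: "continuous_on UNIV (\<lambda>y::nat\<Rightarrow>real. edist n y x)"
  unfolding edist_def enorm_def
  by (intro continuous_on_real_sqrt continuous_on_sum continuous_on_power continuous_on_diff
      continuous_on_const continuous_on_product_coordinates)

lemma cont_enorm_fun: "continuous_on UNIV (\<lambda>y::nat\<Rightarrow>real. enorm n y)"
  unfolding enorm_def
  by (intro continuous_on_real_sqrt continuous_on_sum continuous_on_power continuous_on_diff
      continuous_on_const continuous_on_product_coordinates)

lemma coord_le_enorm: assumes "i < n" shows "\<bar>x i\<bar> \<le> enorm n x"
proof -
  have "(x i)\<^sup>2 \<le> (\<Sum>j<n. (x j)\<^sup>2)"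
    using \<open>i<n\<close> by (intro member_le_sum) auto
  then show ?thesis unfolding enorm_def
    using real_sqrt_le_mono by fastforce
qed

lemma compact_cballn: "compact (cballn n \<Xi>)"
proof -
  define B where "B = (\<lambda>i::nat. if i < n then {-\<bar>\<Xi>\<bar>..\<bar>\<Xi>\<bar>} else {0::real})"
  have "compactin (product_topology (\<lambda>i. euclidean) UNIV) (PiE UNIV B)"
    unfolding compactin_PiE B_def compactin_euclidean_iff by (simp add: compact_Icc)
  then have c: "compact (PiE UNIV B)"
    by (simp add: euclidean_product_topology)
  have cl: "closed {y::nat\<Rightarrow>real. enorm n y \<le> \<Xi>}"
    by (rule closed_Collect_le[OF cont_enorm_fun]) auto
  have "cballn n \<Xi> = PiE UNIV B \<inter> {y. enorm n y \<le> \<Xi>}"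
  proof (intro equalityI subsetI IntI)
    fix x assume x: "x \<in> cballn n \<Xi>"
    show "x \<in> PiE UNIV B"
    proof (rule PiE_I)
      fix i show "x i \<in> B i"
        using x coord_le_enorm[of i n x] by (auto simp: B_def cballn_def)
    qed auto
  next
    fix x assume "x \<in> cballn n \<Xi>" then show "x \<in> {y. enorm n y \<le> \<Xi>}" by (simp add: cballn_def)
  next
    fix x assume "x \<in> PiE UNIV B \<inter> {y. enorm n y \<le> \<Xi>}" then have "x \<in> PiE UNIV B" "enorm n x \<le> \<Xi>" by auto
    then show "x \<in> cballn n \<Xi>" unfolding cballn_def
    proof (intro CollectI conjI allI impI)
      fix i assume xB: "x \<in> PiE UNIV B" and "n \<le> i"
      have "x i \<in> B i" using PiE_mem[OF xB] by simp
      then show "x i = 0" using \<open>n \<le> i\<close> by (simp add: B_def)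
    qed
  qed
  then show ?thesis using compact_Int_closed[OF c cl] by (simp only:)
qed

lemma contn_bounded:
  assumes "contn_on n (cballn n \<Xi>) f"
  shows "\<exists>B. \<forall>x\<in>cballn n \<Xi>. \<bar>f x\<bar> \<le> B"
proof -
  have "continuous_on (cballn n \<Xi>) f"
    unfolding continuous_on_topological
  proof (intro ballI allI impI)
    fix x U assume x: "x \<in> cballn n \<Xi>" and U: "open U" "f x \<in> U"
    then obtain e where e: "e > 0" "\<forall>y. dist y (f x) < e \<longrightarrow> y \<in> U"
      by (meson open_dist)
    obtain d where d: "d > 0" "\<forall>y\<in>cballn n \<Xi>. edist n y x < d \<longrightarrow> \<bar>f y - f x\<bar> < e"
      using assms x e unfolding contn_on_def by blast
    show "\<exists>A. open A \<and> x \<in> A \<and> (\<forall>y\<in>cballn n \<Xi>. y \<in> A \<longrightarrow> f y \<in> U)"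
    proof (intro exI conjI ballI impI)
      show "open {y. edist n y x < d}"
        by (rule open_Collect_less[OF cont_edist_fun]) auto
      show "x \<in> {y. edist n y x < d}" using d by (simp add: edist_def enorm_def)
      fix y assume "y \<in> cballn n \<Xi>" "y \<in> {y. edist n y x < d}"
      then show "f y \<in> U" using d e by (auto simp: dist_real_def)
    qed
  qed
  then have "compact (f ` cballn n \<Xi>)"
    using compact_continuous_image compact_cballn by blast
  then have "bounded (f ` cballn n \<Xi>)" by (rule compact_imp_bounded)
  then show ?thesis unfolding bounded_iff by auto
qed


lemma edist_nonneg[simp]: "0 \<le> edist n x y"
  by (simp add: edist_def enorm_def sum_nonneg)

lemma enorm_nonneg[simp]: "0 \<le> enorm n x"
  by (simp add: enorm_def sum_nonneg)

lemma edist_sym: "edist n x y = edist n y x"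
proof -
  have "(\<lambda>i. (x i - y i)\<^sup>2) = (\<lambda>i. (y i - x i)\<^sup>2)" by (auto simp: power2_commute)
  then show ?thesis by (simp only: edist_def enorm_def)
qed

lemma edist_self[simp]: "edist n x x = 0"
  by (simp add: edist_def enorm_def)

lemma edist_tri: "edist n x z \<le> edist n x y + edist n y z"
proof -
  have "edist n x z = L2_set (\<lambda>i. (x i - y i) + (y i - z i)) {..<n}"
    by (simp add: edist_L2)
  also have "\<dots> \<le> edist n x y + edist n y z"
    unfolding edist_L2 by (rule L2_set_triangle_ineq)
  finally show ?thesis .
qed

lemma enorm_tri: "enorm n x \<le> enorm n y + edist n x y"
proof -
  have "enorm n x = L2_set (\<lambda>i. y i + (x i - y i)) {..<n}"
    by (simp add: enorm_L2)
  also have "\<dots> \<le> enorm n y + edist n x y"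
    unfolding edist_L2 enorm_L2 by (rule L2_set_triangle_ineq)
  finally show ?thesis .
qed

lemma enorm_diff_le: "\<bar>enorm n x - enorm n y\<bar> \<le> edist n x y"
  using enorm_tri[of n x y] enorm_tri[of n y x] edist_sym[of n x y] by linarith

lemma enorm_scale: "enorm n (\<lambda>i. c * x i) = \<bar>c\<bar> * enorm n x"
proof -
  have "enorm n (\<lambda>i. c * x i) = enorm n (\<lambda>i. \<bar>c\<bar> * x i)"
    by (simp add: enorm_def power_mult_distrib)
  also have "\<dots> = \<bar>c\<bar> * enorm n x"
    unfolding enorm_L2 by (rule L2_set_right_distrib[symmetric]) simp
  finally show ?thesis .
qed

lemma enorm_zero[simp]: "enorm n (\<lambda>i. 0) = 0"
  by (simp add: enorm_def)

lemma enorm_e0: "0 < n \<Longrightarrow> enorm n (\<lambda>i. if i = 0 then t else 0) = \<bar>t\<bar>"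
proof -
  assume "0 < n"
  have "(\<Sum>i<n. (if i = 0 then t else 0)\<^sup>2) = (\<Sum>i<n. if i = 0 then t\<^sup>2 else 0)"
    by (intro sum.cong) auto
  also have "\<dots> = t\<^sup>2" using \<open>0 < n\<close> by (simp add: sum.delta)
  finally show ?thesis by (simp add: enorm_def)
qed

lemma edist_e0: "0 < n \<Longrightarrow> edist n (\<lambda>i. if i = 0 then t else 0) (\<lambda>i. 0) = \<bar>t\<bar>"
  by (simp add: edist_def enorm_e0)

lemma zero_in_cballn: "0 \<le> R \<Longrightarrow> (\<lambda>i. 0) \<in> cballn n R"
  by (simp add: cballn_def)

lemma e0_in_cballn: "0 < n \<Longrightarrow> \<bar>t\<bar> \<le> R \<Longrightarrow> (\<lambda>i. if i = 0 then t else 0) \<in> cballn n R"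
  by (simp add: cballn_def enorm_e0)

lemma scale_in_cballn: "x \<in> cballn n R \<Longrightarrow> \<bar>c\<bar> * enorm n x \<le> R' \<Longrightarrow> (\<lambda>i. c * x i) \<in> cballn n R'"
  by (simp add: cballn_def enorm_scale)

definition kok :: "real option \<Rightarrow> bool" where
  "kok k \<longleftrightarrow> (case k of None \<Rightarrow> True | Some \<alpha> \<Rightarrow> 0 < \<alpha> \<and> \<alpha> < 1)"

definition good :: "real option \<Rightarrow> nat \<Rightarrow> (nat \<Rightarrow> real) set \<Rightarrow> ((nat \<Rightarrow> real) \<Rightarrow> real) \<Rightarrow> real \<Rightarrow> real \<Rightarrow> bool" where
  "good k n D f S H \<longleftrightarrow> 0 \<le> S \<and> 0 \<le> H \<and> contn_on n D f \<and> (\<forall>x\<in>D. \<bar>f x\<bar> \<le> S) \<and>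
     (\<forall>\<alpha>. k = Some \<alpha> \<longrightarrow> (\<forall>x\<in>D. \<forall>y\<in>D. 0 < edist n y x \<and> edist n y x \<le> 1 \<longrightarrow>
        \<bar>f y - f x\<bar> \<le> H * edist n y x powr \<alpha>))"

lemma goodD:
  assumes "good k n D f S H"
  shows "0 \<le> S" "0 \<le> H" "contn_on n D f" "\<And>x. x \<in> D \<Longrightarrow> \<bar>f x\<bar> \<le> S"
    "\<And>\<alpha> x y. k = Some \<alpha> \<Longrightarrow> x \<in> D \<Longrightarrow> y \<in> D \<Longrightarrow> 0 < edist n y x \<Longrightarrow> edist n y x \<le> 1 \<Longrightarrow>
        \<bar>f y - f x\<bar> \<le> H * edist n y x powr \<alpha>"
  using assms unfolding good_def by blast+

lemma goodI:
  assumes "0 \<le> S" "0 \<le> H" "contn_on n D f" "\<And>x. x \<in> D \<Longrightarrow> \<bar>f x\<bar> \<le> S"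
    "\<And>\<alpha> x y. k = Some \<alpha> \<Longrightarrow> x \<in> D \<Longrightarrow> y \<in> D \<Longrightarrow> 0 < edist n y x \<Longrightarrow> edist n y x \<le> 1 \<Longrightarrow>
        \<bar>f y - f x\<bar> \<le> H * edist n y x powr \<alpha>"
  shows "good k n D f S H"
  using assms unfolding good_def by blast

lemma contn_zero_dist:
  assumes "contn_on n D f" "x \<in> D" "y \<in> D" "edist n y x = 0"
  shows "f y = f x"
proof (rule ccontr)
  assume "f y \<noteq> f x"
  then have "\<bar>f y - f x\<bar> > 0" by simp
  then obtain d where "d > 0" "\<forall>z\<in>D. edist n z x < d \<longrightarrow> \<bar>f z - f x\<bar> < \<bar>f y - f x\<bar>"
    using assms(1,2) unfolding contn_on_def by blast
  then show False using assms(3,4) by auto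
qed

lemma good_mono:
  assumes g: "good k n D f S H" and "S \<le> S'" "H \<le> H'"
  shows "good k n D f S' H'"
proof (rule goodI)
  note G = goodD[OF g]
  show "0 \<le> S'" "0 \<le> H'" using G(1,2) assms(2,3) by linarith+
  show "contn_on n D f" by (rule G(3))
  show "\<bar>f x\<bar> \<le> S'" if "x \<in> D" for x using G(4)[OF that] assms(2) by linarith
  show "\<bar>f y - f x\<bar> \<le> H' * edist n y x powr \<alpha>"
    if "k = Some \<alpha>" "x \<in> D" "y \<in> D" "0 < edist n y x" "edist n y x \<le> 1" for \<alpha> x y
  proof -
    have "\<bar>f y - f x\<bar> \<le> H * edist n y x powr \<alpha>" by (rule G(5)[OF that])
    also have "\<dots> \<le> H' * edist n y x powr \<alpha>" using assms(3) by (intro mult_right_mono) auto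
    finally show ?thesis .
  qed
qed

lemma contn_subset:
  assumes "contn_on n D f" "D' \<subseteq> D"
  shows "contn_on n D' f"
  unfolding contn_on_def
proof (intro ballI allI impI)
  fix x e assume x: "x \<in> D'" and e: "(0::real) < e"
  then have "x \<in> D" using assms(2) by blast
  then obtain d where d: "d > 0" "\<forall>y\<in>D. edist n y x < d \<longrightarrow> \<bar>f y - f x\<bar> < e"
    using assms(1) e unfolding contn_on_def by meson
  show "\<exists>d>0. \<forall>y\<in>D'. edist n y x < d \<longrightarrow> \<bar>f y - f x\<bar> < e"
    using d assms(2) by blast
qed

lemma good_subset:
  assumes g: "good k n D f S H" and sub: "D' \<subseteq> D"
  shows "good k n D' f S H"
proof (rule goodI)
  note G = goodD[OF g]
  show "0 \<le> S" "0 \<le> H" using G(1,2) by auto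
  show "contn_on n D' f" by (rule contn_subset[OF G(3) sub])
  show "\<bar>f x\<bar> \<le> S" if "x \<in> D'" for x using G(4) that sub by blast
  show "\<bar>f y - f x\<bar> \<le> H * edist n y x powr \<alpha>"
    if "k = Some \<alpha>" "x \<in> D'" "y \<in> D'" "0 < edist n y x" "edist n y x \<le> 1" for \<alpha> x y
    using G(5)[of \<alpha> x y] that sub by blast
qed

lemma good_cong:
  assumes g: "good k n D f S H" and eq: "\<And>x. x \<in> D \<Longrightarrow> f x = g x"
  shows "good k n D g S H"
proof (rule goodI)
  note G = goodD[OF g]
  show "0 \<le> S" "0 \<le> H" using G(1,2) by auto
  show "contn_on n D g" using G(3) eq unfolding contn_on_def by simp
  show "\<bar>g x\<bar> \<le> S" if "x \<in> D" for x using G(4)[OF that] eq[OF that] by simp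
  show "\<bar>g y - g x\<bar> \<le> H * edist n y x powr \<alpha>"
    if "k = Some \<alpha>" "x \<in> D" "y \<in> D" "0 < edist n y x" "edist n y x \<le> 1" for \<alpha> x y
    using G(5)[OF that] eq that(2,3) by simp
qed

lemma good_add:
  assumes f: "good k n D f S1 H1" and g: "good k n D g S2 H2"
  shows "good k n D (\<lambda>x. f x + g x) (S1 + S2) (H1 + H2)"
proof (rule goodI)
  note F = goodD[OF f] and G = goodD[OF g]
  show "0 \<le> S1 + S2" "0 \<le> H1 + H2" using F G by auto
  show "\<bar>f x + g x\<bar> \<le> S1 + S2" if "x \<in> D" for x
    using F(4)[OF that] G(4)[OF that] by linarith
  show "\<bar>f y + g y - (f x + g x)\<bar> \<le> (H1 + H2) * edist n y x powr \<alpha>"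
    if "k = Some \<alpha>" "x \<in> D" "y \<in> D" "0 < edist n y x" "edist n y x \<le> 1" for \<alpha> x y
    using F(5)[OF that] G(5)[OF that] by (simp add: algebra_simps)
  show "contn_on n D (\<lambda>x. f x + g x)"
    unfolding contn_on_def
  proof (intro ballI allI impI)
    fix x e assume x: "x \<in> D" and e: "(0::real) < e"
    obtain d1 where d1: "d1 > 0" "\<forall>y\<in>D. edist n y x < d1 \<longrightarrow> \<bar>f y - f x\<bar> < e/2"
      using F(3) x e unfolding contn_on_def by (meson half_gt_zero)
    obtain d2 where d2: "d2 > 0" "\<forall>y\<in>D. edist n y x < d2 \<longrightarrow> \<bar>g y - g x\<bar> < e/2"
      using G(3) x e unfolding contn_on_def by (meson half_gt_zero)
    show "\<exists>d>0. \<forall>y\<in>D. edist n y x < d \<longrightarrow> \<bar>f y + g y - (f x + g x)\<bar> < e"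
    proof (intro exI[of _ "min d1 d2"] conjI ballI impI)
      show "0 < min d1 d2" using d1 d2 by simp
      fix y assume y: "y \<in> D" "edist n y x < min d1 d2"
      then have "\<bar>f y - f x\<bar> < e/2" "\<bar>g y - g x\<bar> < e/2" using d1 d2 by auto
      then show "\<bar>f y + g y - (f x + g x)\<bar> < e" by linarith
    qed
  qed
qed

lemma abs_prod_diff:
  fixes a b c d S1 S2 :: real
  assumes "\<bar>a\<bar> \<le> S1" "\<bar>d\<bar> \<le> S2"
  shows "\<bar>a * b - c * d\<bar> \<le> S1 * \<bar>b - d\<bar> + S2 * \<bar>a - c\<bar>"
proof -
  have "a * b - c * d = a * (b - d) + d * (a - c)" by (simp add: algebra_simps)
  then have "\<bar>a * b - c * d\<bar> \<le> \<bar>a\<bar> * \<bar>b - d\<bar> + \<bar>d\<bar> * \<bar>a - c\<bar>"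
    by (metis abs_mult abs_triangle_ineq)
  also have "\<dots> \<le> S1 * \<bar>b - d\<bar> + S2 * \<bar>a - c\<bar>"
    by (intro add_mono mult_right_mono assms) auto
  finally show ?thesis .
qed

lemma good_mult:
  assumes f: "good k n D f S1 H1" and g: "good k n D g S2 H2"
  shows "good k n D (\<lambda>x. f x * g x) (S1 * S2) (S1 * H2 + S2 * H1)"
proof (rule goodI)
  note F = goodD[OF f] and G = goodD[OF g]
  show "0 \<le> S1 * S2" "0 \<le> S1 * H2 + S2 * H1" using F G by auto
  show "\<bar>f x * g x\<bar> \<le> S1 * S2" if "x \<in> D" for x
    using F(4)[OF that] G(4)[OF that] by (simp add: abs_mult mult_mono')
  show "\<bar>f y * g y - f x * g x\<bar> \<le> (S1 * H2 + S2 * H1) * edist n y x powr \<alpha>"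
    if "k = Some \<alpha>" "x \<in> D" "y \<in> D" "0 < edist n y x" "edist n y x \<le> 1" for \<alpha> x y
  proof -
    have "\<bar>f y * g y - f x * g x\<bar> \<le> S1 * \<bar>g y - g x\<bar> + S2 * \<bar>f y - f x\<bar>"
      by (rule abs_prod_diff) (use F(4) G(4) that in auto)
    also have "\<dots> \<le> S1 * (H2 * edist n y x powr \<alpha>) + S2 * (H1 * edist n y x powr \<alpha>)"
      by (intro add_mono mult_left_mono F(5)[OF that] G(5)[OF that]) (use F G in auto)
    finally show ?thesis by (simp add: algebra_simps)
  qed
  show "contn_on n D (\<lambda>x. f x * g x)"
    unfolding contn_on_def
  proof (intro ballI allI impI)
    fix x e assume x: "x \<in> D" and e: "(0::real) < e"
    define e' where "e' = e / (2 * (S1 + S2 + 1))"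
    have e': "e' > 0" using e F G by (simp add: e'_def)
    obtain d1 where d1: "d1 > 0" "\<forall>y\<in>D. edist n y x < d1 \<longrightarrow> \<bar>f y - f x\<bar> < e'"
      using F(3) x e' unfolding contn_on_def by meson
    obtain d2 where d2: "d2 > 0" "\<forall>y\<in>D. edist n y x < d2 \<longrightarrow> \<bar>g y - g x\<bar> < e'"
      using G(3) x e' unfolding contn_on_def by meson
    show "\<exists>d>0. \<forall>y\<in>D. edist n y x < d \<longrightarrow> \<bar>f y * g y - f x * g x\<bar> < e"
    proof (intro exI[of _ "min d1 d2"] conjI ballI impI)
      show "0 < min d1 d2" using d1 d2 by simp
      fix y assume y: "y \<in> D" "edist n y x < min d1 d2"
      have "\<bar>f y * g y - f x * g x\<bar> \<le> S1 * \<bar>g y - g x\<bar> + S2 * \<bar>f y - f x\<bar>"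
        by (rule abs_prod_diff) (use F(4) G(4) x y in auto)
      also have "\<dots> \<le> S1 * e' + S2 * e'"
        using d1 d2 y F(1) G(1) by (intro add_mono mult_left_mono) auto
      also have "\<dots> < e"
      proof -
        have "(S1 + S2) * e' = e * ((S1 + S2) / (2 * (S1 + S2 + 1)))"
          by (simp add: e'_def)
        also have "\<dots> < e * 1"
          using e F(1) G(1) by (intro mult_strict_left_mono) auto
        finally show ?thesis by (simp add: algebra_simps)
      qed
      finally show "\<bar>f y * g y - f x * g x\<bar> < e" .
    qed
  qed
qed


lemma le_powr_self: "0 \<le> (d::real) \<Longrightarrow> d \<le> 1 \<Longrightarrow> 0 < \<alpha> \<Longrightarrow> \<alpha> < 1 \<Longrightarrow> d \<le> d powr \<alpha>"
  using powr_mono'[of \<alpha> 1 d] by (simp add: powr_one)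

lemma powr_le_self_ge1: "1 \<le> (L::real) \<Longrightarrow> 0 < \<alpha> \<Longrightarrow> \<alpha> < 1 \<Longrightarrow> L powr \<alpha> \<le> L"
  using powr_mono[of \<alpha> 1 L] by (simp add: powr_one)

lemma kokD: "kok k \<Longrightarrow> k = Some \<alpha> \<Longrightarrow> 0 < \<alpha> \<and> \<alpha> < 1"
  by (simp add: kok_def)

lemma good_pull:
  assumes f: "good k n' D' f S H" and k: "kok k" and L: "1 \<le> L"
    and map: "\<And>x. x \<in> D \<Longrightarrow> \<phi> x \<in> D'"
    and lip: "\<And>x y. x \<in> D \<Longrightarrow> y \<in> D \<Longrightarrow> edist n' (\<phi> y) (\<phi> x) \<le> L * edist n y x"
  shows "good k n D (\<lambda>x. f (\<phi> x)) S ((H + 2*S) * L)"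
proof (rule goodI)
  note F = goodD[OF f]
  show "0 \<le> S" "0 \<le> (H + 2*S) * L" using F L by auto
  show "\<bar>f (\<phi> x)\<bar> \<le> S" if "x \<in> D" for x using F(4) map that by blast
  show "contn_on n D (\<lambda>x. f (\<phi> x))"
    unfolding contn_on_def
  proof (intro ballI allI impI)
    fix x e assume x: "x \<in> D" and e: "(0::real) < e"
    obtain d where d: "d > 0" "\<forall>y\<in>D'. edist n' y (\<phi> x) < d \<longrightarrow> \<bar>f y - f (\<phi> x)\<bar> < e"
      using F(3) map[OF x] e unfolding contn_on_def by meson
    show "\<exists>d>0. \<forall>y\<in>D. edist n y x < d \<longrightarrow> \<bar>f (\<phi> y) - f (\<phi> x)\<bar> < e"
    proof (intro exI[of _ "d / L"] conjI ballI impI)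
      show "0 < d / L" using d L by simp
      fix y assume y: "y \<in> D" "edist n y x < d / L"
      have "edist n' (\<phi> y) (\<phi> x) \<le> L * edist n y x" using lip x y by blast
      also have "\<dots> < L * (d / L)" using y L by (intro mult_strict_left_mono) auto
      also have "\<dots> = d" using L by simp
      finally show "\<bar>f (\<phi> y) - f (\<phi> x)\<bar> < e" using d map y by blast
    qed
  qed
  show "\<bar>f (\<phi> y) - f (\<phi> x)\<bar> \<le> (H + 2 * S) * L * edist n y x powr \<alpha>"
    if a: "k = Some \<alpha>" and x: "x \<in> D" and y: "y \<in> D" and d0: "0 < edist n y x" and d1: "edist n y x \<le> 1" for \<alpha> x y
  proof -
    have \<alpha>: "0 < \<alpha>" "\<alpha> < 1" using kokD[OF k a] by auto
    define d where "d = edist n y x"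
    define d' where "d' = edist n' (\<phi> y) (\<phi> x)"
    have dd': "d' \<le> L * d" using lip[OF x y] by (simp add: d_def d'_def)
    have dpos: "0 < d powr \<alpha>" using d0 by (simp add: d_def)
    have ineq: "d \<le> d powr \<alpha>" using le_powr_self[of d \<alpha>] d0 d1 \<alpha> by (simp add: d_def)
    have RHS0: "0 \<le> (H + 2 * S) * L * d powr \<alpha>" using F(1,2) L by simp
    consider "d' = 0" | "0 < d' \<and> d' \<le> 1" | "1 < d'" using edist_nonneg[of n' "\<phi> y" "\<phi> x"]
      unfolding d'_def by linarith
    then have "\<bar>f (\<phi> y) - f (\<phi> x)\<bar> \<le> (H + 2 * S) * L * d powr \<alpha>"
    proof cases
      case 1
      then have "f (\<phi> y) = f (\<phi> x)" using contn_zero_dist[OF F(3) map[OF x] map[OF y]] by (simp add: d'_def)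
      then show ?thesis using RHS0 by simp
    next
      case 2
      then have "\<bar>f (\<phi> y) - f (\<phi> x)\<bar> \<le> H * d' powr \<alpha>"
        using F(5)[OF a map[OF x] map[OF y]] by (simp add: d'_def)
      also have "\<dots> \<le> H * (L * d) powr \<alpha>"
        using 2 dd' \<alpha> F(2) by (intro mult_left_mono powr_mono2) auto
      also have "\<dots> = H * L powr \<alpha> * d powr \<alpha>"
        using L d0 by (simp add: powr_mult d_def)
      also have "\<dots> \<le> H * L * d powr \<alpha>"
        using powr_le_self_ge1[OF L \<alpha>] F(2) dpos by (intro mult_right_mono mult_left_mono) auto
      also have "\<dots> \<le> (H + 2 * S) * L * d powr \<alpha>"
        using F(1) L dpos by (intro mult_right_mono) auto
      finally show ?thesis .
    next
      case 3
      have "\<bar>f (\<phi> y) - f (\<phi> x)\<bar> \<le> 2 * S"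
        using F(4)[OF map[OF x]] F(4)[OF map[OF y]] by linarith
      also have "\<dots> \<le> 2 * S * (L * d powr \<alpha>)"
      proof -
        have "1 \<le> L * d powr \<alpha>"
          using 3 dd' ineq L by (smt (verit) mult_left_mono)
        then show ?thesis using F(1) mult_left_mono[of 1 "L * d powr \<alpha>" "2*S"] by simp
      qed
      also have "\<dots> \<le> (H + 2 * S) * L * d powr \<alpha>"
        using F(2) L dpos by (simp add: algebra_simps)
      finally show ?thesis .
    qed
    then show ?thesis by (simp add: d_def)
  qed
qed

lemma good_lip:
  assumes k: "kok k" and S: "0 \<le> S" and Lw: "0 \<le> Lw"
    and b: "\<And>x. x \<in> D \<Longrightarrow> \<bar>f x\<bar> \<le> S"
    and lip: "\<And>x y. x \<in> D \<Longrightarrow> y \<in> D \<Longrightarrow> \<bar>f y - f x\<bar> \<le> Lw * edist n y x"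
  shows "good k n D f S Lw"
proof (rule goodI)
  show "0 \<le> S" "0 \<le> Lw" using S Lw by auto
  show "\<bar>f x\<bar> \<le> S" if "x \<in> D" for x using b that .
  show "contn_on n D f"
    unfolding contn_on_def
  proof (intro ballI allI impI)
    fix x e assume x: "x \<in> D" and e: "(0::real) < e"
    show "\<exists>d>0. \<forall>y\<in>D. edist n y x < d \<longrightarrow> \<bar>f y - f x\<bar> < e"
    proof (intro exI[of _ "e / (Lw + 1)"] conjI ballI impI)
      show "0 < e / (Lw + 1)" using e Lw by simp
      fix y assume y: "y \<in> D" "edist n y x < e / (Lw + 1)"
      have "\<bar>f y - f x\<bar> \<le> Lw * edist n y x" using lip x y by blast
      also have "\<dots> \<le> Lw * (e / (Lw + 1))" using y Lw by (intro mult_left_mono) auto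
      also have "\<dots> < e"
      proof -
        have "Lw * (e / (Lw + 1)) = e * (Lw / (Lw + 1))" by simp
        also have "\<dots> < e * 1" using e Lw by (intro mult_strict_left_mono) auto
        finally show ?thesis by simp
      qed
      finally show "\<bar>f y - f x\<bar> < e" .
    qed
  qed
  show "\<bar>f y - f x\<bar> \<le> Lw * edist n y x powr \<alpha>"
    if a: "k = Some \<alpha>" and x: "x \<in> D" and y: "y \<in> D" and d0: "0 < edist n y x" and d1: "edist n y x \<le> 1" for \<alpha> x y
  proof -
    have \<alpha>: "0 < \<alpha>" "\<alpha> < 1" using kokD[OF k a] by auto
    have "\<bar>f y - f x\<bar> \<le> Lw * edist n y x" using lip x y by blast
    also have "\<dots> \<le> Lw * edist n y x powr \<alpha>"
      using le_powr_self[of "edist n y x" \<alpha>] d0 d1 \<alpha> Lw by (intro mult_left_mono) auto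
    finally show ?thesis .
  qed
qed


lemma good_paste:
  assumes k: "kok k" and rho: "0 < \<rho>"
    and z: "\<And>x. x \<in> cballn n R \<Longrightarrow> enorm n x \<le> \<rho> \<Longrightarrow> f x = 0"
    and g: "good k n {x \<in> cballn n R. \<rho> \<le> enorm n x} f S H"
  shows "good k n (cballn n R) f S H"
proof -
  define A where "A = {x \<in> cballn n R. \<rho> \<le> enorm n x}"
  note G = goodD[OF g[folded A_def]]
  have inA: "x \<in> A" if "x \<in> cballn n R" "\<not> enorm n x \<le> \<rho>" for x
    using that by (simp add: A_def)
  have key: "\<bar>f y - f x\<bar> \<le> H * edist n y x powr \<alpha>"
    if a: "k = Some \<alpha>" and x: "x \<in> cballn n R" and y: "y \<in> cballn n R" and xr: "enorm n x \<le> \<rho>"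
      and d0: "0 < edist n y x" and d1: "edist n y x \<le> 1" for \<alpha> x y
  proof -
    have \<alpha>: "0 < \<alpha>" "\<alpha> < 1" using kokD[OF k a] by auto
    have fx: "f x = 0" using z x xr by blast
    show ?thesis
    proof (cases "enorm n y \<le> \<rho>")
      case True
      then show ?thesis using fx z[OF y] G(2) by simp
    next
      case False
      define c where "c = \<rho> / enorm n y"
      define w where "w = (\<lambda>i. c * y i)"
      have ny: "enorm n y > \<rho>" using False by simp
      have c0: "0 < c" "c < 1" using ny rho by (auto simp: c_def)
      have nw: "enorm n w = \<rho>"
      proof -
        have "enorm n w = \<bar>c\<bar> * enorm n y" unfolding w_def by (rule enorm_scale)
        also have "\<dots> = \<rho>" using ny rho c0 by (simp add: c_def)
        finally show ?thesis .
      qed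
      have yR: "enorm n y \<le> R" using y by (simp add: cballn_def)
      have wB: "w \<in> cballn n R"
        unfolding w_def by (rule scale_in_cballn[OF y]) (use c0 ny yR rho in \<open>simp add: c_def\<close>)
      have wA: "w \<in> A" using wB nw by (simp add: A_def)
      have yA: "y \<in> A" using y ny by (simp add: A_def)
      have fw: "f w = 0" using z[OF wB] nw by simp
      have "edist n y w = enorm n (\<lambda>i. (1 - c) * y i)"
        by (simp add: edist_def w_def algebra_simps)
      also have "\<dots> = (1 - c) * enorm n y" using c0 by (simp add: enorm_scale)
      also have "\<dots> = enorm n y - \<rho>" using ny rho by (simp add: c_def algebra_simps)
      finally have dyw: "edist n y w = enorm n y - \<rho>" .
      have "enorm n y - \<rho> \<le> enorm n y - enorm n x" using xr by simp
      also have "\<dots> \<le> edist n y x" using enorm_diff_le[of n y x] by simp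
      finally have dle: "edist n y w \<le> edist n y x" using dyw by simp
      show ?thesis
      proof (cases "edist n y w = 0")
        case True
        then have "f y = f w" using contn_zero_dist[OF G(3) wA yA] by simp
        then show ?thesis using fx fw G(2) by simp
      next
        case False
        then have dw0: "0 < edist n y w" using edist_nonneg[of n y w] by linarith
        have "\<bar>f y - f x\<bar> = \<bar>f y - f w\<bar>" using fx fw by simp
        also have "\<dots> \<le> H * edist n y w powr \<alpha>"
          using G(5)[OF a wA yA dw0] dle d1 by simp
        also have "\<dots> \<le> H * edist n y x powr \<alpha>"
          using G(2) dle \<alpha> by (intro mult_left_mono powr_mono2) auto
        finally show ?thesis .
      qed
    qed
  qed
  show ?thesis
  proof (rule goodI)
    show "0 \<le> S" "0 \<le> H" using G(1,2) by auto
    show "\<bar>f x\<bar> \<le> S" if "x \<in> cballn n R" for x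
    proof (cases "enorm n x \<le> \<rho>")
      case True then show ?thesis using z that G(1) by simp
    next
      case False then show ?thesis using G(4) inA that by blast
    qed
    show "\<bar>f y - f x\<bar> \<le> H * edist n y x powr \<alpha>"
      if a: "k = Some \<alpha>" and x: "x \<in> cballn n R" and y: "y \<in> cballn n R"
        and d0: "0 < edist n y x" and d1: "edist n y x \<le> 1" for \<alpha> x y
    proof (cases "enorm n x \<le> \<rho>")
      case True show ?thesis by (rule key[OF a x y True d0 d1])
    next
      case xF: False
      show ?thesis
      proof (cases "enorm n y \<le> \<rho>")
        case True
        have "\<bar>f y - f x\<bar> = \<bar>f x - f y\<bar>" by simp
        also have "\<dots> \<le> H * edist n x y powr \<alpha>"
          using key[OF a y x True] d0 d1 edist_sym[of n x y] by simp
        finally show ?thesis using edist_sym[of n x y] by simp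
      next
        case False
        show ?thesis by (rule G(5)[OF a inA[OF x xF] inA[OF y False] d0 d1])
      qed
    qed
    show "contn_on n (cballn n R) f"
      unfolding contn_on_def
    proof (intro ballI allI impI)
      fix x e assume x: "x \<in> cballn n R" and e: "(0::real) < e"
      show "\<exists>d>0. \<forall>y\<in>cballn n R. edist n y x < d \<longrightarrow> \<bar>f y - f x\<bar> < e"
      proof (cases "enorm n x < \<rho>")
        case True
        show ?thesis
        proof (intro exI[of _ "\<rho> - enorm n x"] conjI ballI impI)
          show "0 < \<rho> - enorm n x" using True by simp
          fix y assume y: "y \<in> cballn n R" "edist n y x < \<rho> - enorm n x"
          have "enorm n y \<le> enorm n x + edist n y x" using enorm_tri[of n y x] by simp
          then have "enorm n y \<le> \<rho>" using y by simp
          then show "\<bar>f y - f x\<bar> < e" using z[OF y(1)] z[OF x] True e by simp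
        qed
      next
        case False
        then have xA: "x \<in> A" using x by (simp add: A_def)
        obtain d1 where d1: "d1 > 0" "\<forall>y\<in>A. edist n y x < d1 \<longrightarrow> \<bar>f y - f x\<bar> < e"
          using G(3) xA e unfolding contn_on_def by meson
        define d where "d = (if \<rho> < enorm n x then min d1 (enorm n x - \<rho>) else d1)"
        show ?thesis
        proof (intro exI[of _ d] conjI ballI impI)
          show "0 < d" using d1 False by (simp add: d_def)
          fix y assume y: "y \<in> cballn n R" "edist n y x < d"
          have "d \<le> d1" by (simp add: d_def)
          show "\<bar>f y - f x\<bar> < e"
          proof (cases "\<rho> \<le> enorm n y")
            case True
            then have "y \<in> A" using y by (simp add: A_def)
            then show ?thesis using d1 y \<open>d \<le> d1\<close> by auto
          next
            case yF: False
            show ?thesis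
            proof (cases "\<rho> < enorm n x")
              case True
              have "enorm n x \<le> enorm n y + edist n x y" by (rule enorm_tri)
              then have "enorm n x - \<rho> < edist n y x" using yF edist_sym[of n x y] by simp
              moreover have "d \<le> enorm n x - \<rho>" using True by (simp add: d_def)
              ultimately show ?thesis using y by simp
            next
              case False
              then have "enorm n x \<le> \<rho>" by simp
              then show ?thesis using z[OF x] z[OF y(1)] yF e by simp
            qed
          qed
        qed
      qed
    qed
  qed
qed

definition hpart :: "real option \<Rightarrow> nat \<Rightarrow> real \<Rightarrow> ((nat \<Rightarrow> real) \<Rightarrow> real) \<Rightarrow> real" where
  "hpart k n \<Xi> f = (case k of None \<Rightarrow> 0 | Some \<alpha> \<Rightarrow> Sup (holder_quots \<alpha> n \<Xi> f))"

lemma normC_split: "normC k n \<Xi> f = (SUP \<xi>\<in>cballn n \<Xi>. \<bar>f \<xi>\<bar>) + hpart k n \<Xi> f"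
  by (simp add: normC_def hpart_def)

lemma holder_quots_ne:
  assumes "0 < n" "0 < \<Xi>"
  shows "\<bar>f (\<lambda>i. if i = 0 then min \<Xi> 1 else 0) - f (\<lambda>i. 0)\<bar> / (min \<Xi> 1) powr \<alpha> \<in> holder_quots \<alpha> n \<Xi> f"
proof -
  have "(\<lambda>i. if i = 0 then min \<Xi> 1 else 0) \<in> cballn n \<Xi>"
    using assms by (intro e0_in_cballn) auto
  moreover have "(\<lambda>i. 0::real) \<in> cballn n \<Xi>" using assms by (intro zero_in_cballn) auto
  moreover have "edist n (\<lambda>i. if i = 0 then min \<Xi> 1 else 0) (\<lambda>i. 0) = min \<Xi> 1"
    using assms by (simp add: edist_e0)
  ultimately show ?thesis unfolding holder_quots_def using assms
    by (intro CollectI exI[of _ "\<lambda>i. 0"] exI[of _ "\<lambda>i. if i = 0 then min \<Xi> 1 else 0"]) simp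
qed

lemma inC_good:
  assumes n: "0 < n" and X: "0 < \<Xi>" and f: "inC k n \<Xi> f"
  shows "good k n (cballn n \<Xi>) f (SUP \<xi>\<in>cballn n \<Xi>. \<bar>f \<xi>\<bar>) (hpart k n \<Xi> f)"
proof -
  have c: "contn_on n (cballn n \<Xi>) f" using f by (simp add: inC_def)
  obtain B where B: "\<forall>x\<in>cballn n \<Xi>. \<bar>f x\<bar> \<le> B" using contn_bounded[OF c] by blast
  have bdd: "bdd_above ((\<lambda>\<xi>. \<bar>f \<xi>\<bar>) ` cballn n \<Xi>)" using B by (auto intro: bdd_aboveI2)
  have up: "\<bar>f x\<bar> \<le> (SUP \<xi>\<in>cballn n \<Xi>. \<bar>f \<xi>\<bar>)" if "x \<in> cballn n \<Xi>" for x
    by (rule cSUP_upper[OF that bdd])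
  have z: "(\<lambda>i. 0::real) \<in> cballn n \<Xi>" using X by (intro zero_in_cballn) auto
  show ?thesis
  proof (rule goodI)
    show "0 \<le> (SUP \<xi>\<in>cballn n \<Xi>. \<bar>f \<xi>\<bar>)" using up[OF z] by linarith
    show "contn_on n (cballn n \<Xi>) f" by (rule c)
    show "\<bar>f x\<bar> \<le> (SUP \<xi>\<in>cballn n \<Xi>. \<bar>f \<xi>\<bar>)" if "x \<in> cballn n \<Xi>" for x using up[OF that] .
    show "0 \<le> hpart k n \<Xi> f"
    proof (cases k)
      case None then show ?thesis by (simp add: hpart_def)
    next
      case (Some \<alpha>)
      then have bq: "bdd_above (holder_quots \<alpha> n \<Xi> f)" using f by (simp add: inC_def)
      have "0 \<le> \<bar>f (\<lambda>i. if i = 0 then min \<Xi> 1 else 0) - f (\<lambda>i. 0)\<bar> / (min \<Xi> 1) powr \<alpha>" by simp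
      also have "\<dots> \<le> Sup (holder_quots \<alpha> n \<Xi> f)"
        by (rule cSup_upper[OF holder_quots_ne[OF n X] bq])
      finally show ?thesis using Some by (simp add: hpart_def)
    qed
    show "\<bar>f y - f x\<bar> \<le> hpart k n \<Xi> f * edist n y x powr \<alpha>"
      if a: "k = Some \<alpha>" and x: "x \<in> cballn n \<Xi>" and y: "y \<in> cballn n \<Xi>"
        and d0: "0 < edist n y x" and d1: "edist n y x \<le> 1" for \<alpha> x y
    proof -
      have bq: "bdd_above (holder_quots \<alpha> n \<Xi> f)" using f a by (simp add: inC_def)
      have "\<bar>f y - f x\<bar> / edist n y x powr \<alpha> \<in> holder_quots \<alpha> n \<Xi> f"
        unfolding holder_quots_def using x y d0 d1 by blast
      then have "\<bar>f y - f x\<bar> / edist n y x powr \<alpha> \<le> Sup (holder_quots \<alpha> n \<Xi> f)"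
        by (rule cSup_upper[OF _ bq])
      moreover have "0 < edist n y x powr \<alpha>" using d0 by simp
      ultimately show ?thesis using a by (simp add: hpart_def divide_le_eq)
    qed
  qed
qed

lemma inC_norm_nonneg:
  assumes "0 < n" "0 < \<Xi>" "inC k n \<Xi> f"
  shows "0 \<le> normC k n \<Xi> f"
  using goodD(1,2)[OF inC_good[OF assms]] by (simp add: normC_split)

lemma good_inC:
  assumes n: "0 < n" and X: "0 < \<Xi>" and g: "good k n (cballn n \<Xi>) f S H"
  shows "inC k n \<Xi> f" "normC k n \<Xi> f \<le> S + H"
proof -
  note G = goodD[OF g]
  have z: "(\<lambda>i. 0::real) \<in> cballn n \<Xi>" using X by (intro zero_in_cballn) auto
  have sup: "(SUP \<xi>\<in>cballn n \<Xi>. \<bar>f \<xi>\<bar>) \<le> S"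
    by (rule cSUP_least) (use z G(4) in auto)
  have q: "q \<le> H" if a: "k = Some \<alpha>" and q: "q \<in> holder_quots \<alpha> n \<Xi> f" for \<alpha> q
  proof -
    obtain x y where xy: "q = \<bar>f y - f x\<bar> / edist n y x powr \<alpha>" "x \<in> cballn n \<Xi>" "y \<in> cballn n \<Xi>"
      "0 < edist n y x" "edist n y x \<le> 1"
      using q unfolding holder_quots_def by blast
    have "0 < edist n y x powr \<alpha>" using xy by simp
    then show ?thesis using G(5)[OF a xy(2,3,4,5)] xy(1) by (simp add: divide_le_eq)
  qed
  show "inC k n \<Xi> f"
  proof (cases k)
    case None then show ?thesis using G(3) by (simp add: inC_def)
  next
    case (Some \<alpha>)
    then show ?thesis using G(3) q[OF Some] by (auto simp: inC_def bdd_above_def)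
  qed
  have hp: "hpart k n \<Xi> f \<le> H"
  proof (cases k)
    case None then show ?thesis using G(2) by (simp add: hpart_def)
  next
    case (Some \<alpha>)
    have "Sup (holder_quots \<alpha> n \<Xi> f) \<le> H"
      by (rule cSup_least) (use holder_quots_ne[OF n X] q[OF Some] in blast)+
    then show ?thesis using Some by (simp add: hpart_def)
  qed
  show "normC k n \<Xi> f \<le> S + H" using sup hp by (simp add: normC_split)
qed


definition kinv :: "real \<Rightarrow> nat \<Rightarrow> (nat \<Rightarrow> real) \<Rightarrow> (nat \<Rightarrow> real)" where
  "kinv X n \<eta> = (\<lambda>i. (X / enorm n \<eta>)\<^sup>2 * \<eta> i)"

definition proj :: "nat \<Rightarrow> nat \<Rightarrow> (nat \<Rightarrow> real) \<Rightarrow> (nat \<Rightarrow> real)" where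
  "proj n m \<eta> = (\<lambda>i. if i = 0 then sqrt (\<Sum>j<n-1. (\<eta> j)\<^sup>2) else if i = m - 1 then \<eta> (n - 1) else 0)"

lemma enorm_sq: "(enorm n x)\<^sup>2 = (\<Sum>i<n. (x i)\<^sup>2)"
  by (simp add: enorm_def sum_nonneg)

lemma edist_sq: "(edist n x y)\<^sup>2 = (\<Sum>i<n. (x i - y i)\<^sup>2)"
  by (simp add: edist_def enorm_sq)

lemma enorm_inv: "enorm n (kinv X n \<eta>) = X\<^sup>2 / enorm n \<eta>"
proof (cases "enorm n \<eta> = 0")
  case True then show ?thesis by (simp add: kinv_def)
next
  case False
  have "enorm n (kinv X n \<eta>) = \<bar>(X / enorm n \<eta>)\<^sup>2\<bar> * enorm n \<eta>"
    unfolding kinv_def by (rule enorm_scale)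
  also have "\<dots> = X\<^sup>2 / enorm n \<eta>" using False by (simp add: power2_eq_square)
  finally show ?thesis .
qed

lemma inv_zero_out: "\<eta> \<in> cballn n R \<Longrightarrow> i \<ge> n \<Longrightarrow> kinv X n \<eta> i = 0"
  by (simp add: kinv_def cballn_def)

lemma inv_in_cballn:
  assumes "\<eta> \<in> cballn n R" "X\<^sup>2 / enorm n \<eta> \<le> R'"
  shows "kinv X n \<eta> \<in> cballn n R'"
proof -
  have "enorm n (kinv X n \<eta>) \<le> R'" using assms(2) by (simp only: enorm_inv)
  moreover have "\<forall>i\<ge>n. kinv X n \<eta> i = 0" using assms(1) by (simp add: kinv_def cballn_def)
  ultimately show ?thesis by (simp add: cballn_def)
qed

lemma sum_lessThan_last: "0 < (n::nat) \<Longrightarrow> (\<Sum>i<n. f i) = (\<Sum>i<n-1. f i) + f (n - 1)"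
proof -
  assume "0 < n"
  then obtain k where "n = Suc k" using gr0_implies_Suc by blast
  then show ?thesis by simp
qed


lemma edist_inv:
  assumes x: "enorm n x \<noteq> 0" and y: "enorm n y \<noteq> 0"
  shows "edist n (kinv X n y) (kinv X n x) = X\<^sup>2 * edist n y x / (enorm n x * enorm n y)"
proof -
  define a where "a = (X / enorm n y)\<^sup>2"
  define b where "b = (X / enorm n x)\<^sup>2"
  define P where "P = (\<Sum>i<n. x i * y i)"
  have ny: "(\<Sum>i<n. (y i)\<^sup>2) = (enorm n y)\<^sup>2" by (simp add: enorm_sq)
  have nx: "(\<Sum>i<n. (x i)\<^sup>2) = (enorm n x)\<^sup>2" by (simp add: enorm_sq)
  have e1: "(edist n (kinv X n y) (kinv X n x))\<^sup>2 = a\<^sup>2 * (enorm n y)\<^sup>2 - 2 * a * b * P + b\<^sup>2 * (enorm n x)\<^sup>2"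
  proof -
    have "(edist n (kinv X n y) (kinv X n x))\<^sup>2 = (\<Sum>i<n. (a * y i - b * x i)\<^sup>2)"
      by (simp add: edist_sq kinv_def a_def b_def)
    also have "\<dots> = (\<Sum>i<n. a\<^sup>2 * (y i)\<^sup>2 - 2 * a * b * (x i * y i) + b\<^sup>2 * (x i)\<^sup>2)"
      by (intro sum.cong) (auto simp: power2_eq_square algebra_simps)
    also have "\<dots> = a\<^sup>2 * (\<Sum>i<n. (y i)\<^sup>2) - 2 * a * b * P + b\<^sup>2 * (\<Sum>i<n. (x i)\<^sup>2)"
      by (simp add: sum.distrib sum_subtractf sum_distrib_left P_def)
    finally show ?thesis by (simp add: nx ny)
  qed
  have e2: "(edist n y x)\<^sup>2 = (enorm n y)\<^sup>2 - 2 * P + (enorm n x)\<^sup>2"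
  proof -
    have "(edist n y x)\<^sup>2 = (\<Sum>i<n. (y i - x i)\<^sup>2)" by (rule edist_sq)
    also have "\<dots> = (\<Sum>i<n. (y i)\<^sup>2 - 2 * (x i * y i) + (x i)\<^sup>2)"
      by (rule sum.cong[OF refl]) (simp add: power2_eq_square algebra_simps)
    also have "\<dots> = (\<Sum>i<n. (y i)\<^sup>2) - 2 * P + (\<Sum>i<n. (x i)\<^sup>2)"
      by (simp add: sum.distrib sum_subtractf sum_distrib_left P_def)
    finally show ?thesis by (simp add: nx ny)
  qed
  have "(edist n (kinv X n y) (kinv X n x))\<^sup>2 = (X\<^sup>2 * edist n y x / (enorm n x * enorm n y))\<^sup>2"
    unfolding e1 power_divide power_mult_distrib e2 using x y
    by (simp add: a_def b_def field_simps power2_eq_square)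
  then show ?thesis
    by (rule power2_eq_imp_eq) (auto intro!: divide_nonneg_nonneg mult_nonneg_nonneg)
qed


lemma proj_sum_m1:
  assumes m: "2 \<le> m"
  shows "(\<Sum>i<m-1. (proj n m \<eta> i)\<^sup>2) = (\<Sum>j<n-1. (\<eta> j)\<^sup>2)"
proof -
  have "(\<Sum>i<m-1. (proj n m \<eta> i)\<^sup>2) = (\<Sum>i<m-1. if i = 0 then (\<Sum>j<n-1. (\<eta> j)\<^sup>2) else 0)"
  proof (rule sum.cong[OF refl])
    fix i assume i: "i \<in> {..<m-1}"
    show "(proj n m \<eta> i)\<^sup>2 = (if i = 0 then (\<Sum>j<n-1. (\<eta> j)\<^sup>2) else 0)"
    proof (cases "i = 0")
      case True then show ?thesis by (simp add: proj_def sum_nonneg)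
    next
      case False then have "i \<noteq> m - 1" using i by auto
      then show ?thesis using False by (simp add: proj_def)
    qed
  qed
  also have "\<dots> = (\<Sum>j<n-1. (\<eta> j)\<^sup>2)" using m by (simp add: sum.delta)
  finally show ?thesis .
qed

lemma flat_proj:
  assumes m: "2 \<le> m"
  shows "flat a m Q (proj n m \<eta>) = flat a n Q \<eta>"
proof -
  have "proj n m \<eta> (m - 1) = \<eta> (n - 1)" using m by (simp add: proj_def)
  then show ?thesis unfolding flat_def proj_sum_m1[OF m] by simp
qed

lemma enorm_proj:
  assumes m: "2 \<le> m" and n: "1 \<le> n"
  shows "enorm m (proj n m \<eta>) = enorm n \<eta>"
proof -
  have "(\<Sum>i<m. (proj n m \<eta> i)\<^sup>2) = (\<Sum>i<m-1. (proj n m \<eta> i)\<^sup>2) + (proj n m \<eta> (m-1))\<^sup>2"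
    using m by (intro sum_lessThan_last) simp
  also have "\<dots> = (\<Sum>j<n-1. (\<eta> j)\<^sup>2) + (\<eta> (n-1))\<^sup>2"
  proof -
    have "proj n m \<eta> (m-1) = \<eta> (n-1)" using m by (simp add: proj_def)
    then show ?thesis by (simp only: proj_sum_m1[OF m])
  qed
  also have "\<dots> = (\<Sum>j<n. (\<eta> j)\<^sup>2)"
    using n by (intro sum_lessThan_last[symmetric]) simp
  finally show ?thesis by (simp add: enorm_def)
qed

lemma proj_in_cballn:
  assumes m: "2 \<le> m" and n: "1 \<le> n" and "\<eta> \<in> cballn n R"
  shows "proj n m \<eta> \<in> cballn m R"
proof -
  have "enorm m (proj n m \<eta>) \<le> R" using assms by (simp add: enorm_proj cballn_def)
  moreover have "\<forall>i\<ge>m. proj n m \<eta> i = 0" using m by (auto simp: proj_def)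
  ultimately show ?thesis by (simp add: cballn_def)
qed

lemma edist_proj:
  assumes m: "2 \<le> m" and n: "1 \<le> n"
  shows "edist m (proj n m y) (proj n m x) \<le> edist n y x"
proof -
  have "(edist m (proj n m y) (proj n m x))\<^sup>2
      = (\<Sum>i<m-1. (proj n m y i - proj n m x i)\<^sup>2) + (y (n-1) - x (n-1))\<^sup>2"
    unfolding edist_sq using m by (subst sum_lessThan_last) (auto simp: proj_def)
  also have "(\<Sum>i<m-1. (proj n m y i - proj n m x i)\<^sup>2) = (enorm (n-1) y - enorm (n-1) x)\<^sup>2"
  proof -
    have "(\<Sum>i<m-1. (proj n m y i - proj n m x i)\<^sup>2)
        = (\<Sum>i<m-1. if i = 0 then (enorm (n-1) y - enorm (n-1) x)\<^sup>2 else 0)"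
    proof (rule sum.cong[OF refl])
      fix i assume i: "i \<in> {..<m-1}"
      show "(proj n m y i - proj n m x i)\<^sup>2 = (if i = 0 then (enorm (n-1) y - enorm (n-1) x)\<^sup>2 else 0)"
      proof (cases "i = 0")
        case True then show ?thesis by (simp add: proj_def enorm_def)
      next
        case False then have "i \<noteq> m - 1" using i by auto
        then show ?thesis using False by (simp add: proj_def)
      qed
    qed
    also have "\<dots> = (enorm (n-1) y - enorm (n-1) x)\<^sup>2" using m by (simp add: sum.delta)
    finally show ?thesis .
  qed
  also have "(enorm (n-1) y - enorm (n-1) x)\<^sup>2 \<le> (edist (n-1) y x)\<^sup>2"
    using enorm_diff_le[of "n-1" y x] by (metis abs_ge_zero power2_abs power_mono)
  also have "(edist (n-1) y x)\<^sup>2 + (y (n-1) - x (n-1))\<^sup>2 = (edist n y x)\<^sup>2"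
    unfolding edist_sq using n by (subst (2) sum_lessThan_last) auto
  finally have "(edist m (proj n m y) (proj n m x))\<^sup>2 \<le> (edist n y x)\<^sup>2" by simp
  then show ?thesis by (simp add: power2_le_iff_abs_le)
qed

lemma proj_inv:
  assumes m: "2 \<le> m" and n: "1 \<le> n"
  shows "proj n m (kinv X n \<eta>) = kinv X m (proj n m \<eta>)"
proof
  fix i
  define c where "c = (X / enorm n \<eta>)\<^sup>2"
  have c0: "0 \<le> c" by (simp add: c_def)
  have "sqrt (\<Sum>j<n-1. (c * \<eta> j)\<^sup>2) = sqrt (c\<^sup>2 * (\<Sum>j<n-1. (\<eta> j)\<^sup>2))"
    by (simp add: power_mult_distrib sum_distrib_left)
  also have "\<dots> = c * sqrt (\<Sum>j<n-1. (\<eta> j)\<^sup>2)"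
    using c0 by (simp add: real_sqrt_mult)
  finally have s: "sqrt (\<Sum>j<n-1. (c * \<eta> j)\<^sup>2) = c * sqrt (\<Sum>j<n-1. (\<eta> j)\<^sup>2)" .
  have e: "enorm m (proj n m \<eta>) = enorm n \<eta>" by (rule enorm_proj[OF m n])
  have r: "kinv X m (proj n m \<eta>) i = c * proj n m \<eta> i" by (simp add: kinv_def e c_def)
  have l: "proj n m (kinv X n \<eta>) i = (if i = 0 then sqrt (\<Sum>j<n-1. (c * \<eta> j)\<^sup>2)
      else if i = m - 1 then c * \<eta> (n-1) else 0)" by (simp add: proj_def kinv_def c_def)
  show "proj n m (kinv X n \<eta>) i = kinv X m (proj n m \<eta>) i"
    unfolding l r using s by (simp add: proj_def)
qed


lemma rr_flat:
  assumes n: "1 \<le> n" and a: "0 < a"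
  shows "rr (a * sqrt (\<Sum>i<n-1. (\<xi> i)\<^sup>2)) (a * \<xi> (n-1)) = a * enorm n \<xi>"
proof -
  have s: "0 \<le> (\<Sum>i<n-1. (\<xi> i)\<^sup>2)" by (simp add: sum_nonneg)
  have "(a * sqrt (\<Sum>i<n-1. (\<xi> i)\<^sup>2))\<^sup>2 + (a * \<xi> (n-1))\<^sup>2 = a\<^sup>2 * ((\<Sum>i<n-1. (\<xi> i)\<^sup>2) + (\<xi> (n-1))\<^sup>2)"
    using s by (simp add: power_mult_distrib algebra_simps)
  also have "(\<Sum>i<n-1. (\<xi> i)\<^sup>2) + (\<xi> (n-1))\<^sup>2 = (\<Sum>i<n. (\<xi> i)\<^sup>2)"
    using n by (intro sum_lessThan_last[symmetric]) simp
  finally show ?thesis using a by (simp add: rr_def enorm_def real_sqrt_mult)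
qed

lemma flat_cut0:
  assumes n: "1 \<le> n" and a: "0 < a" and X: "0 < \<Xi>0"
  shows "flat a n (cut0 chi (a * \<Xi>0) Q) \<xi> = chi (enorm n \<xi> / \<Xi>0) * flat a n Q \<xi>"
  unfolding flat_def cut0_def rr_flat[OF n a] using a X by simp

lemma flat_cutinf:
  assumes n: "1 \<le> n" and a: "0 < a" and X: "0 < \<Xi>0"
  shows "flat a n (cutinf chi (a * \<Xi>0) Q) \<xi> = (1 - chi (enorm n \<xi> / \<Xi>0)) * flat a n Q \<xi>"
  unfolding flat_def cutinf_def rr_flat[OF n a] using a X by simp

lemma flat_mult: "flat a n (\<lambda>w z. Q1 w z * Q2 w z) \<xi> = flat a n Q1 \<xi> * flat a n Q2 \<xi>"
  by (simp add: flat_def)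


definition gT :: "real option \<Rightarrow> nat \<Rightarrow> (nat \<Rightarrow> real) set \<Rightarrow> ((nat \<Rightarrow> real) \<Rightarrow> real) \<Rightarrow> real \<Rightarrow> bool" where
  "gT k n D f T \<longleftrightarrow> (\<exists>S H. good k n D f S H \<and> S + H \<le> T)"

lemma gT_nonneg:
  assumes "gT k n D f T" shows "0 \<le> T"
proof -
  obtain S H where g: "good k n D f S H" "S + H \<le> T" using assms unfolding gT_def by blast
  have "0 \<le> S" "0 \<le> H" using goodD(1,2)[OF g(1)] by auto
  then show ?thesis using g(2) by linarith
qed

lemma gT_mono:
  assumes "gT k n D f T" "T \<le> T'" shows "gT k n D f T'"
proof -
  obtain S H where g: "good k n D f S H" "S + H \<le> T" using assms(1) unfolding gT_def by blast
  then have "S + H \<le> T'" using assms(2) by linarith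
  then show ?thesis unfolding gT_def using g(1) by blast
qed

lemma gT_cong: "gT k n D f T \<Longrightarrow> (\<And>x. x \<in> D \<Longrightarrow> f x = g x) \<Longrightarrow> gT k n D g T"
  unfolding gT_def using good_cong by blast

lemma gT_subset: "gT k n D f T \<Longrightarrow> D' \<subseteq> D \<Longrightarrow> gT k n D' f T"
  unfolding gT_def using good_subset by blast

lemma gT_add:
  assumes "gT k n D f T1" "gT k n D g T2"
  shows "gT k n D (\<lambda>x. f x + g x) (T1 + T2)"
proof -
  obtain S1 H1 S2 H2 where "good k n D f S1 H1" "S1 + H1 \<le> T1" "good k n D g S2 H2" "S2 + H2 \<le> T2"
    using assms unfolding gT_def by blast
  then show ?thesis unfolding gT_def
    by (intro exI[of _ "S1 + S2"] exI[of _ "H1 + H2"] conjI good_add) auto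
qed

lemma gT_mult:
  assumes "gT k n D f T1" "gT k n D g T2"
  shows "gT k n D (\<lambda>x. f x * g x) (T1 * T2)"
proof -
  obtain S1 H1 S2 H2 where f: "good k n D f S1 H1" "S1 + H1 \<le> T1" and g: "good k n D g S2 H2" "S2 + H2 \<le> T2"
    using assms unfolding gT_def by blast
  note F = goodD[OF f(1)] and G = goodD[OF g(1)]
  have "S1 * S2 + (S1 * H2 + S2 * H1) \<le> (S1 + H1) * (S2 + H2)"
    using F(1,2) G(1,2) by (simp add: algebra_simps)
  also have "\<dots> \<le> T1 * T2"
    using f(2) g(2) F(1,2) G(1,2) by (intro mult_mono) auto
  finally show ?thesis unfolding gT_def
    using good_mult[OF f(1) g(1)] by blast
qed

lemma gT_pull:
  assumes f: "gT k n' D' f T" and k: "kok k" and L: "1 \<le> L"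
    and map: "\<And>x. x \<in> D \<Longrightarrow> \<phi> x \<in> D'"
    and lip: "\<And>x y. x \<in> D \<Longrightarrow> y \<in> D \<Longrightarrow> edist n' (\<phi> y) (\<phi> x) \<le> L * edist n y x"
  shows "gT k n D (\<lambda>x. f (\<phi> x)) (3 * L * T)"
proof -
  obtain S H where g: "good k n' D' f S H" "S + H \<le> T" using f unfolding gT_def by blast
  note G = goodD[OF g(1)]
  have "S \<le> L * S" using G(1) L mult_right_mono[of 1 L S] by simp
  moreover have "0 \<le> L * H" using G(2) L by simp
  ultimately have "S + (H + 2*S) * L \<le> 3 * L * (S + H)"
    by (simp add: algebra_simps)
  also have "\<dots> \<le> 3 * L * T" using g(2) L by simp
  finally show ?thesis unfolding gT_def
    using good_pull[OF g(1) k L map lip] by blast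
qed

lemma gT_lip:
  assumes k: "kok k" and S: "0 \<le> S" and Lw: "0 \<le> Lw"
    and b: "\<And>x. x \<in> D \<Longrightarrow> \<bar>f x\<bar> \<le> S"
    and lip: "\<And>x y. x \<in> D \<Longrightarrow> y \<in> D \<Longrightarrow> \<bar>f y - f x\<bar> \<le> Lw * edist n y x"
  shows "gT k n D f (S + Lw)"
  unfolding gT_def using good_lip[OF k S Lw b lip] by blast

lemma gT_paste:
  assumes k: "kok k" and rho: "0 < \<rho>"
    and z: "\<And>x. x \<in> cballn n R \<Longrightarrow> enorm n x \<le> \<rho> \<Longrightarrow> f x = 0"
    and g: "gT k n {x \<in> cballn n R. \<rho> \<le> enorm n x} f T"
  shows "gT k n (cballn n R) f T"
proof -
  obtain S H where "good k n {x \<in> cballn n R. \<rho> \<le> enorm n x} f S H" "S + H \<le> T"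
    using g unfolding gT_def by blast
  then show ?thesis unfolding gT_def using good_paste[OF k rho, of n R f] z by blast
qed

lemma gT_of_inC:
  assumes "0 < n" "0 < \<Xi>" "inC k n \<Xi> f"
  shows "gT k n (cballn n \<Xi>) f (normC k n \<Xi> f)"
  unfolding gT_def using inC_good[OF assms] by (auto simp: normC_split)

lemma gT_to_inC:
  assumes "0 < n" "0 < \<Xi>" "gT k n (cballn n \<Xi>) f T"
  shows "inC k n \<Xi> f" "normC k n \<Xi> f \<le> T"
proof -
  obtain S H where g: "good k n (cballn n \<Xi>) f S H" "S + H \<le> T" using assms(3) unfolding gT_def by blast
  show "inC k n \<Xi> f" using good_inC(1)[OF assms(1,2) g(1)] .
  show "normC k n \<Xi> f \<le> T" using good_inC(2)[OF assms(1,2) g(1)] g(2) by linarith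
qed

lemma pow_lip:
  fixes s t :: real
  assumes "0 \<le> s" "s \<le> 1" "0 \<le> t" "t \<le> 1"
  shows "\<bar>s ^ k - t ^ k\<bar> \<le> real k * \<bar>s - t\<bar>"
proof (induction k)
  case 0 then show ?case by simp
next
  case (Suc k)
  have "s ^ Suc k - t ^ Suc k = s * (s ^ k - t ^ k) + t ^ k * (s - t)"
    by (simp add: algebra_simps)
  then have "\<bar>s ^ Suc k - t ^ Suc k\<bar> \<le> \<bar>s\<bar> * \<bar>s ^ k - t ^ k\<bar> + \<bar>t ^ k\<bar> * \<bar>s - t\<bar>"
    by (metis abs_mult abs_triangle_ineq)
  also have "\<dots> \<le> 1 * (real k * \<bar>s - t\<bar>) + 1 * \<bar>s - t\<bar>"
  proof (intro add_mono mult_mono)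
    show "\<bar>t ^ k\<bar> \<le> 1" using assms by (simp add: power_le_one)
  qed (use assms Suc.IH in auto)
  finally show ?case by (simp add: algebra_simps)
qed


lemma cballn_norm0:
  assumes "\<eta> \<in> cballn n X" "enorm n \<eta> = 0"
  shows "\<eta> = (\<lambda>i. 0)"
proof
  fix i show "\<eta> i = 0"
  proof (cases "i < n")
    case True then show ?thesis using coord_le_enorm[OF True, of \<eta>] assms(2) by simp
  next
    case False then show ?thesis using assms(1) by (simp add: cballn_def)
  qed
qed

lemma contn_agree0:
  assumes n: "0 < n" and X: "0 < X"
    and cF: "contn_on n (cballn n X) F" and cG: "contn_on n (cballn n X) G"
    and eq: "\<And>\<eta>. \<eta> \<in> cballn n X \<Longrightarrow> enorm n \<eta> \<noteq> 0 \<Longrightarrow> F \<eta> = G \<eta>"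
    and et: "\<eta> \<in> cballn n X"
  shows "F \<eta> = G \<eta>"
proof (cases "enorm n \<eta> = 0")
  case False then show ?thesis using eq et by blast
next
  case True
  then have e0: "\<eta> = (\<lambda>i. 0)" using cballn_norm0 et by blast
  show ?thesis
  proof (rule ccontr)
    assume ne: "F \<eta> \<noteq> G \<eta>"
    define e where "e = \<bar>F \<eta> - G \<eta>\<bar> / 2"
    have e: "e > 0" using ne by (simp add: e_def)
    obtain d1 where d1: "d1 > 0" "\<forall>y\<in>cballn n X. edist n y \<eta> < d1 \<longrightarrow> \<bar>F y - F \<eta>\<bar> < e"
      using cF et e unfolding contn_on_def by meson
    obtain d2 where d2: "d2 > 0" "\<forall>y\<in>cballn n X. edist n y \<eta> < d2 \<longrightarrow> \<bar>G y - G \<eta>\<bar> < e"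
      using cG et e unfolding contn_on_def by meson
    define t where "t = min (min d1 d2) X / 2"
    have t: "0 < t" "t < d1" "t < d2" "t \<le> X" using d1 d2 X by (auto simp: t_def)
    define y where "y = (\<lambda>i::nat. if i = 0 then t else (0::real))"
    have yB: "y \<in> cballn n X" unfolding y_def using n t by (intro e0_in_cballn) auto
    have dy: "edist n y \<eta> = t" using n t by (simp add: y_def e0 edist_e0)
    have ny: "enorm n y \<noteq> 0" using n t by (simp add: y_def enorm_e0)
    have "F y = G y" using eq[OF yB ny] .
    moreover have "\<bar>F y - F \<eta>\<bar> < e" "\<bar>G y - G \<eta>\<bar> < e" using d1 d2 yB dy t by auto
    ultimately have "\<bar>F \<eta> - G \<eta>\<bar> < 2 * e" by linarith
    then show False by (simp add: e_def)
  qed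
qed

definition e2 :: "real \<Rightarrow> real \<Rightarrow> real \<Rightarrow> (nat \<Rightarrow> real)" where
  "e2 a w z = (\<lambda>i. if i = 0 then w / a else if i = 1 then z / a else 0)"

lemma sum2: "(\<Sum>i<(2::nat). f i) = f 0 + (f 1 :: real)"
  by (simp add: numeral_2_eq_2)

lemma enorm_e2: "0 < a \<Longrightarrow> enorm 2 (e2 a w z) = rr w z / a"
  by (simp add: enorm_def sum2 e2_def rr_def power_divide real_sqrt_divide add_divide_distrib[symmetric])

lemma edist_e2: "0 < a \<Longrightarrow> edist 2 (e2 a w' z') (e2 a w z) = dist (w', z') (w, z) / a"
  by (simp add: edist_def enorm_def sum2 e2_def dist_Pair_Pair dist_real_def power_divide
      real_sqrt_divide add_divide_distrib[symmetric] diff_divide_distrib[symmetric])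

lemma flat_e2:
  assumes a: "0 < a" and n: "2 \<le> n" and w: "0 \<le> w"
  shows "flat a n Q (proj 2 n (e2 a w z)) = Q w z"
proof -
  have "flat a n Q (proj 2 n (e2 a w z)) = flat a 2 Q (e2 a w z)" by (rule flat_proj[OF n])
  also have "\<dots> = Q w z" using a w by (simp add: flat_def e2_def)
  finally show ?thesis .
qed

lemma cont_wz:
  assumes a: "0 < a" and n: "2 \<le> n" and c: "contn_on n (cballn n (R / a)) (flat a n Q)"
  shows "continuous_on {(w, z). w \<ge> 0 \<and> rr w z \<le> R} (\<lambda>(w, z). Q w z)"
  unfolding continuous_on_iff
proof (intro ballI allI impI)
  let ?S = "{(w, z). w \<ge> 0 \<and> rr w z \<le> R}"
  fix p e assume p: "p \<in> ?S" and e: "(0::real) < e"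
  obtain w z where pwz: "p = (w, z)" by (cases p)
  have inB: "proj 2 n (e2 a w' z') \<in> cballn n (R / a)" if "rr w' z' \<le> R" for w' z'
  proof (rule proj_in_cballn[OF n])
    show "e2 a w' z' \<in> cballn 2 (R / a)"
      using that a by (auto simp: cballn_def enorm_e2 divide_right_mono) (simp add: e2_def)
  qed simp
  have pw: "0 \<le> w" "rr w z \<le> R" using p pwz by auto
  obtain d where d: "d > 0" "\<forall>y\<in>cballn n (R / a). edist n y (proj 2 n (e2 a w z)) < d \<longrightarrow>
      \<bar>flat a n Q y - flat a n Q (proj 2 n (e2 a w z))\<bar> < e"
    using c inB[OF pw(2)] e unfolding contn_on_def by meson
  show "\<exists>d>0. \<forall>p'\<in>?S. dist p' p < d \<longrightarrow> dist ((\<lambda>(w, z). Q w z) p') ((\<lambda>(w, z). Q w z) p) < e"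
  proof (intro exI[of _ "a * d"] conjI ballI impI)
    show "0 < a * d" using a d by simp
    fix p' assume p': "p' \<in> ?S" "dist p' p < a * d"
    obtain w' z' where pwz': "p' = (w', z')" by (cases p')
    have pw': "0 \<le> w'" "rr w' z' \<le> R" using p' pwz' by auto
    have "edist n (proj 2 n (e2 a w' z')) (proj 2 n (e2 a w z)) \<le> edist 2 (e2 a w' z') (e2 a w z)"
      by (rule edist_proj[OF n]) simp
    also have "\<dots> = dist p' p / a" using a by (simp add: edist_e2 pwz pwz')
    also have "\<dots> < d" using p' a by (simp add: divide_less_eq mult.commute)
    finally have "\<bar>flat a n Q (proj 2 n (e2 a w' z')) - flat a n Q (proj 2 n (e2 a w z))\<bar> < e"
      using d inB[OF pw'(2)] by blast
    then show "dist ((\<lambda>(w, z). Q w z) p') ((\<lambda>(w, z). Q w z) p) < e"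
      using flat_e2[OF a n pw(1)] flat_e2[OF a n pw'(1)] by (simp add: pwz pwz' dist_real_def)
  qed
qed


lemma compA:
  assumes a: "0 < a" and X: "0 < X" and k: "kok k" and m: "2 \<le> m" and n: "1 \<le> n"
    and Q: "int_space k a m (2 * (a * X)) Q"
  shows "gT k n (cballn n (2 * X)) (flat a n Q) (3 * int_norm k a m (2 * (a * X)) Q)"
proof -
  have R: "2 * (a * X) / a = 2 * X" using a by simp
  have inc: "inC k m (2 * X) (flat a m Q)" using Q R by (simp add: int_space_def)
  have g: "gT k m (cballn m (2 * X)) (flat a m Q) (int_norm k a m (2 * (a * X)) Q)"
    using gT_of_inC[OF _ _ inc] m X R by (simp add: int_norm_def)
  have "gT k n (cballn n (2 * X)) (\<lambda>x. flat a m Q (proj n m x)) (3 * 1 * int_norm k a m (2 * (a * X)) Q)"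
  proof (rule gT_pull[OF g k])
    show "proj n m x \<in> cballn m (2 * X)" if "x \<in> cballn n (2 * X)" for x
      by (rule proj_in_cballn[OF m n that])
    show "edist m (proj n m y) (proj n m x) \<le> 1 * edist n y x" for x y
      using edist_proj[OF m n] by simp
  qed simp
  then have "gT k n (cballn n (2 * X)) (flat a n Q) (3 * 1 * int_norm k a m (2 * (a * X)) Q)"
    by (rule gT_cong) (simp add: flat_proj[OF m])
  then show ?thesis by simp
qed

lemma compE:
  assumes n: "0 < n" and X: "0 < X" and E: "ext_space k a X n Q"
  shows "ext_extends k a X n Q (SOME F. ext_extends k a X n Q F)"
    "gT k n (cballn n X) (SOME F. ext_extends k a X n Q F) (ext_norm k a X n Q)"
proof -
  have "\<exists>F. ext_extends k a X n Q F" using E by (simp add: ext_space_def)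
  then show e: "ext_extends k a X n Q (SOME F. ext_extends k a X n Q F)" by (rule someI_ex)
  then have "inC k n X (SOME F. ext_extends k a X n Q F)" by (simp add: ext_extends_def)
  then show "gT k n (cballn n X) (SOME F. ext_extends k a X n Q F) (ext_norm k a X n Q)"
    unfolding ext_norm_def by (rule gT_of_inC[OF n X])
qed

lemma annulus_inv_lip:
  assumes x0: "r \<le> enorm n x" and y0: "r \<le> enorm n y" and r: "0 < r" and L: "X\<^sup>2 \<le> L * r\<^sup>2" and L0: "0 \<le> L"
  shows "edist n (kinv X n y) (kinv X n x) \<le> L * edist n y x"
proof -
  have nx: "enorm n x \<noteq> 0" and ny: "enorm n y \<noteq> 0" using x0 y0 r by auto
  have "r * r \<le> enorm n x * enorm n y" using x0 y0 r by (intro mult_mono) auto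
  then have rr: "r\<^sup>2 \<le> enorm n x * enorm n y" by (simp add: power2_eq_square)
  have pos: "0 < enorm n x * enorm n y" using x0 y0 r by simp
  have "edist n (kinv X n y) (kinv X n x) = X\<^sup>2 * edist n y x / (enorm n x * enorm n y)"
    by (rule edist_inv[OF nx ny])
  also have "\<dots> \<le> L * edist n y x"
  proof -
    have "X\<^sup>2 * edist n y x \<le> (L * r\<^sup>2) * edist n y x" using L by (intro mult_right_mono) auto
    also have "\<dots> \<le> L * (enorm n x * enorm n y) * edist n y x"
      using rr L0 by (intro mult_right_mono mult_left_mono) auto
    finally show ?thesis using pos by (simp add: divide_le_eq mult.commute mult.left_commute)
  qed
  finally show ?thesis .
qed

lemma compK:
  assumes a: "0 < a" and X: "0 < X" and k: "kok k" and n: "3 \<le> n"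
    and chi1: "\<And>t. t \<le> 1 \<Longrightarrow> chi t = 1"
    and ext: "ext_extends k a X n (cutinf chi (a * X) Q) F" and gF: "gT k n (cballn n X) F E"
  shows "gT k n (cballn n (2 * X)) (flat a n (cutinf chi (a * X) Q)) ((1 + real (n - 2) / X) * (3 * 1 * E))"
proof -
  define A where "A = {x \<in> cballn n (2 * X). X \<le> enorm n x}"
  define w where "w = (\<lambda>\<xi>. (X / enorm n \<xi>) ^ (n - 2))"
  have n1: "1 \<le> n" using n by simp
  have invmap: "kinv X n \<xi> \<in> cballn n X" if "\<xi> \<in> A" for \<xi>
  proof (rule inv_in_cballn)
    show "\<xi> \<in> cballn n (2 * X)" using that by (simp add: A_def)
    have "X \<le> enorm n \<xi>" using that by (simp add: A_def)
    then show "X\<^sup>2 / enorm n \<xi> \<le> X" using X by (simp add: divide_le_eq power2_eq_square mult_left_mono)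
  qed
  have g1: "gT k n A (\<lambda>\<xi>. F (kinv X n \<xi>)) (3 * 1 * E)"
  proof (rule gT_pull[OF gF k _ invmap])
    show "edist n (kinv X n y) (kinv X n x) \<le> 1 * edist n y x" if "x \<in> A" "y \<in> A" for x y
      by (rule annulus_inv_lip[of X]) (use that X in \<open>auto simp: A_def\<close>)
  qed auto
  have g2: "gT k n A w (1 + real (n - 2) / X)"
  proof (rule gT_lip[OF k])
    show "\<bar>w x\<bar> \<le> 1" if "x \<in> A" for x
    proof -
      have "X \<le> enorm n x" using that by (simp add: A_def)
      then have "X / enorm n x \<le> 1" "0 \<le> X / enorm n x" using X by auto
      then show ?thesis by (simp add: w_def power_le_one)
    qed
    show "\<bar>w y - w x\<bar> \<le> real (n - 2) / X * edist n y x" if x: "x \<in> A" and y: "y \<in> A" for x y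
    proof -
      have xX: "X \<le> enorm n x" and yX: "X \<le> enorm n y" using x y by (auto simp: A_def)
      have s: "0 \<le> X / enorm n y" "X / enorm n y \<le> 1" using yX X by auto
      have t: "0 \<le> X / enorm n x" "X / enorm n x \<le> 1" using xX X by auto
      have "X / enorm n y - X / enorm n x = X * (enorm n x - enorm n y) / (enorm n x * enorm n y)"
        using xX yX X by (simp add: field_simps)
      then have "\<bar>X / enorm n y - X / enorm n x\<bar> = X * \<bar>enorm n x - enorm n y\<bar> / (enorm n x * enorm n y)"
        using xX yX X by (simp add: abs_div abs_mult)
      also have "\<dots> \<le> X * edist n y x / (X * X)"
      proof (rule frac_le)
        show "X * \<bar>enorm n x - enorm n y\<bar> \<le> X * edist n y x"
          using enorm_diff_le[of n x y] edist_sym[of n x y] X by (intro mult_left_mono) auto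
        show "X * X \<le> enorm n x * enorm n y" using xX yX X by (intro mult_mono) auto
      qed (use X in auto)
      also have "\<dots> = edist n y x / X" using X by simp
      finally have st: "\<bar>X / enorm n y - X / enorm n x\<bar> \<le> edist n y x / X" .
      have "\<bar>w y - w x\<bar> \<le> real (n - 2) * \<bar>X / enorm n y - X / enorm n x\<bar>"
        unfolding w_def by (rule pow_lip[OF s t])
      also have "\<dots> \<le> real (n - 2) * (edist n y x / X)" using st by (intro mult_left_mono) auto
      finally show ?thesis by simp
    qed
  qed (use X in auto)
  have g3: "gT k n A (\<lambda>\<xi>. w \<xi> * F (kinv X n \<xi>)) ((1 + real (n - 2) / X) * (3 * 1 * E))"
    by (rule gT_mult[OF g2 g1])
  have eq: "w \<xi> * F (kinv X n \<xi>) = flat a n (cutinf chi (a * X) Q) \<xi>" if xi: "\<xi> \<in> A" for \<xi>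
  proof -
    have xX: "X \<le> enorm n \<xi>" using xi by (simp add: A_def)
    have ne: "enorm n \<xi> \<noteq> 0" using xX X by auto
    have en: "enorm n (kinv X n \<xi>) = X\<^sup>2 / enorm n \<xi>" by (rule enorm_inv)
    have nz: "enorm n (kinv X n \<xi>) \<noteq> 0" using en ne X by simp
    have q: "X / enorm n (kinv X n \<xi>) = enorm n \<xi> / X" using en ne X by (simp add: power2_eq_square)
    have bk: "(\<lambda>i. (X / enorm n (kinv X n \<xi>))\<^sup>2 * kinv X n \<xi> i) = \<xi>"
    proof
      fix i
      have h1: "(enorm n \<xi> / X)\<^sup>2 * ((X / enorm n \<xi>)\<^sup>2 * \<xi> i) = ((enorm n \<xi> / X) * (X / enorm n \<xi>))\<^sup>2 * \<xi> i"
        by (simp only: power_mult_distrib mult.assoc)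
      have h2: "(enorm n \<xi> / X) * (X / enorm n \<xi>) = 1" using ne X by (simp add: field_simps)
      have "(enorm n \<xi> / X)\<^sup>2 * ((X / enorm n \<xi>)\<^sup>2 * \<xi> i) = \<xi> i" unfolding h1 h2 by simp
      then show "(X / enorm n (kinv X n \<xi>))\<^sup>2 * kinv X n \<xi> i = \<xi> i"
        unfolding q by (simp only: kinv_def)
    qed
    have "F (kinv X n \<xi>) = kelvin X n (flat a n (cutinf chi (a * X) Q)) (kinv X n \<xi>)"
      using ext invmap[OF xi] nz by (simp add: ext_extends_def)
    also have "\<dots> = (enorm n \<xi> / X) ^ (n - 2) * flat a n (cutinf chi (a * X) Q) \<xi>"
      unfolding kelvin_def bk unfolding q ..
    finally have Fi: "F (kinv X n \<xi>) = (enorm n \<xi> / X) ^ (n - 2) * flat a n (cutinf chi (a * X) Q) \<xi>" .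
    have h2: "(X / enorm n \<xi>) * (enorm n \<xi> / X) = 1" using ne X by (simp add: field_simps)
    have h: "(X / enorm n \<xi>) ^ (n - 2) * (enorm n \<xi> / X) ^ (n - 2) = 1"
      unfolding power_mult_distrib[symmetric] h2 by simp
    show ?thesis unfolding w_def Fi mult.assoc[symmetric] h by simp
  qed
  have g4: "gT k n A (flat a n (cutinf chi (a * X) Q)) ((1 + real (n - 2) / X) * (3 * 1 * E))"
    by (rule gT_cong[OF g3 eq])
  show ?thesis
  proof (rule gT_paste[OF k X _ g4[unfolded A_def]])
    fix x assume "x \<in> cballn n (2 * X)" "enorm n x \<le> X"
    then have "chi (enorm n x / X) = 1" using X chi1 by simp
    then show "flat a n (cutinf chi (a * X) Q) x = 0" by (simp add: flat_cutinf[OF n1 a X])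
  qed
qed


lemma compJ:
  assumes a: "0 < a" and X: "0 < X" and k: "kok k" and n1: "1 \<le> n"
    and chi0: "\<And>t. 2 \<le> t \<Longrightarrow> chi t = 0"
    and gA: "gT k n (cballn n (2 * X)) (flat a n (cut0 chi (a * X) Q)) TA"
  shows "gT k n (cballn n X) (\<lambda>\<eta>. if enorm n \<eta> = 0 then 0 else flat a n (cut0 chi (a * X) Q) (kinv X n \<eta>)) (3 * 4 * TA)"
proof -
  define B where "B = {x \<in> cballn n X. X / 2 \<le> enorm n x}"
  have invmap: "kinv X n \<eta> \<in> cballn n (2 * X)" if "\<eta> \<in> B" for \<eta>
  proof (rule inv_in_cballn)
    show "\<eta> \<in> cballn n X" using that by (simp add: B_def)
    have e: "X / 2 \<le> enorm n \<eta>" using that by (simp add: B_def)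
    then have "X * X \<le> 2 * X * enorm n \<eta>" using X by (simp add: algebra_simps)
    then show "X\<^sup>2 / enorm n \<eta> \<le> 2 * X" using X e by (simp add: divide_le_eq power2_eq_square)
  qed
  have g1: "gT k n B (\<lambda>\<eta>. flat a n (cut0 chi (a * X) Q) (kinv X n \<eta>)) (3 * 4 * TA)"
  proof (rule gT_pull[OF gA k _ invmap])
    show "edist n (kinv X n y) (kinv X n x) \<le> 4 * edist n y x" if "x \<in> B" "y \<in> B" for x y
      by (rule annulus_inv_lip[of "X / 2"]) (use that X in \<open>auto simp: B_def power2_eq_square\<close>)
  qed auto
  have g2: "gT k n B (\<lambda>\<eta>. if enorm n \<eta> = 0 then 0 else flat a n (cut0 chi (a * X) Q) (kinv X n \<eta>)) (3 * 4 * TA)"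
  proof (rule gT_cong[OF g1])
    fix x assume "x \<in> B"
    then have "enorm n x \<noteq> 0" using X by (auto simp: B_def)
    then show "flat a n (cut0 chi (a * X) Q) (kinv X n x) =
        (if enorm n x = 0 then 0 else flat a n (cut0 chi (a * X) Q) (kinv X n x))" by simp
  qed
  show ?thesis
  proof (rule gT_paste[OF k _ _ g2[unfolded B_def]])
    show "0 < X / 2" using X by simp
    fix x assume x: "x \<in> cballn n X" "enorm n x \<le> X / 2"
    show "(if enorm n x = 0 then 0 else flat a n (cut0 chi (a * X) Q) (kinv X n x)) = 0"
    proof (cases "enorm n x = 0")
      case False
      then have pos: "0 < enorm n x" using enorm_nonneg[of n x] by linarith
      have "2 * X * enorm n x \<le> X * X" using x(2) X by (simp add: algebra_simps mult_left_mono)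
      then have "2 * X \<le> X\<^sup>2 / enorm n x" using pos by (simp add: le_divide_eq power2_eq_square)
      then have "2 * X \<le> enorm n (kinv X n x)" by (simp only: enorm_inv)
      then have "2 \<le> enorm n (kinv X n x) / X" using X by (simp add: le_divide_eq)
      then have "chi (enorm n (kinv X n x) / X) = 0" by (rule chi0)
      then show ?thesis using False by (simp add: flat_cut0[OF n1 a X])
    qed simp
  qed
qed

lemma compB:
  assumes X: "0 < X" and k: "kok k" and n1: "1 \<le> n" and m: "3 \<le> m"
    and gF: "gT k m (cballn m X) F1 E1"
  shows "gT k n (cballn n X) (\<lambda>\<eta>. (enorm n \<eta> / X) ^ (m - 2) * F1 (proj n m \<eta>))
           ((1 + real (m - 2) / X) * (3 * 1 * E1))"
proof -
  have m2: "2 \<le> m" using m by simp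
  have g1: "gT k n (cballn n X) (\<lambda>\<eta>. F1 (proj n m \<eta>)) (3 * 1 * E1)"
  proof (rule gT_pull[OF gF k])
    show "proj n m x \<in> cballn m X" if "x \<in> cballn n X" for x by (rule proj_in_cballn[OF m2 n1 that])
    show "edist m (proj n m y) (proj n m x) \<le> 1 * edist n y x" for x y using edist_proj[OF m2 n1] by simp
  qed simp
  have g2: "gT k n (cballn n X) (\<lambda>\<eta>. (enorm n \<eta> / X) ^ (m - 2)) (1 + real (m - 2) / X)"
  proof (rule gT_lip[OF k])
    show "\<bar>(enorm n x / X) ^ (m - 2)\<bar> \<le> 1" if "x \<in> cballn n X" for x
    proof -
      have "enorm n x \<le> X" using that by (simp add: cballn_def)
      then have "enorm n x / X \<le> 1" "0 \<le> enorm n x / X" using X by auto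
      then show ?thesis by (simp add: power_le_one)
    qed
    show "\<bar>(enorm n y / X) ^ (m - 2) - (enorm n x / X) ^ (m - 2)\<bar> \<le> real (m - 2) / X * edist n y x"
      if x: "x \<in> cballn n X" and y: "y \<in> cballn n X" for x y
    proof -
      have xX: "enorm n x \<le> X" and yX: "enorm n y \<le> X" using x y by (auto simp: cballn_def)
      have s: "0 \<le> enorm n y / X" "enorm n y / X \<le> 1" using yX X by auto
      have t: "0 \<le> enorm n x / X" "enorm n x / X \<le> 1" using xX X by auto
      have "\<bar>enorm n y / X - enorm n x / X\<bar> = \<bar>enorm n y - enorm n x\<bar> / X"
        using X by (simp add: diff_divide_distrib[symmetric] abs_div)
      also have "\<dots> \<le> edist n y x / X" using enorm_diff_le[of n y x] X by (simp add: divide_right_mono)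
      finally have st: "\<bar>enorm n y / X - enorm n x / X\<bar> \<le> edist n y x / X" .
      have "\<bar>(enorm n y / X) ^ (m - 2) - (enorm n x / X) ^ (m - 2)\<bar> \<le> real (m - 2) * \<bar>enorm n y / X - enorm n x / X\<bar>"
        by (rule pow_lip[OF s t])
      also have "\<dots> \<le> real (m - 2) * (edist n y x / X)" using st by (intro mult_left_mono) auto
      finally show ?thesis by simp
    qed
  qed (use X in auto)
  show ?thesis by (rule gT_mult[OF g2 g1])
qed


lemma kelvin_inv: "kelvin X n f \<eta> = (X / enorm n \<eta>) ^ (n - 2) * f (kinv X n \<eta>)"
  by (simp add: kelvin_def kinv_def)

definition CC :: "nat \<Rightarrow> nat \<Rightarrow> real \<Rightarrow> real" where
  "CC n m X = 3 * (3 + 3 * (1 + real (n - 2) / X)) + (36 + 3 * (1 + real (m - 2) / X))"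

lemma gT_cont: "gT k n D f T \<Longrightarrow> contn_on n D f"
  unfolding gT_def using goodD(3) by blast

lemma main:
  assumes a: "0 < a" and X: "0 < X" and k: "kok k" and n: "3 \<le> n" and m: "3 \<le> m"
    and chi1: "\<And>t. t \<le> 1 \<Longrightarrow> chi t = 1" and chi0: "\<And>t. 2 \<le> t \<Longrightarrow> chi t = 0"
    and G1: "glob_space k a X chi m Q1" and G2: "glob_space k a X chi n Q2"
  shows "glob_space k a X chi n (\<lambda>w z. Q1 w z * Q2 w z) \<and>
     glob_norm k a X chi n (\<lambda>w z. Q1 w z * Q2 w z)
       \<le> CC n m X * glob_norm k a X chi m Q1 * glob_norm k a X chi n Q2"
proof -
  let ?P = "\<lambda>w z. Q1 w z * Q2 w z"
  let ?R = "2 * (a * X)"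
  let ?S = "{(w, z). w \<ge> 0 \<and> rr w z \<le> ?R}"
  have n1: "1 \<le> n" and n0: "0 < n" and n2: "2 \<le> n" using n by auto
  have m1: "1 \<le> m" and m0: "0 < m" and m2: "2 \<le> m" using m by auto
  have RA: "?R / a = 2 * X" using a by simp
  have X2: "0 < 2 * X" using X by simp
  have ev1: "\<And>w z. 0 \<le> w \<Longrightarrow> Q1 w (-z) = Q1 w z"
    and I1s: "int_space k a m ?R (cut0 chi (a * X) Q1)"
    and E1s: "ext_space k a X m (cutinf chi (a * X) Q1)"
    using G1 by (auto simp: glob_space_def)
  have ev2: "\<And>w z. 0 \<le> w \<Longrightarrow> Q2 w (-z) = Q2 w z"
    and I2s: "int_space k a n ?R (cut0 chi (a * X) Q2)"
    and E2s: "ext_space k a X n (cutinf chi (a * X) Q2)"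
    using G2 by (auto simp: glob_space_def)
  define I1 where "I1 = int_norm k a m ?R (cut0 chi (a * X) Q1)"
  define I2 where "I2 = int_norm k a n ?R (cut0 chi (a * X) Q2)"
  define E1 where "E1 = ext_norm k a X m (cutinf chi (a * X) Q1)"
  define E2 where "E2 = ext_norm k a X n (cutinf chi (a * X) Q2)"
  define F1 where "F1 = (SOME F. ext_extends k a X m (cutinf chi (a * X) Q1) F)"
  define F2 where "F2 = (SOME F. ext_extends k a X n (cutinf chi (a * X) Q2) F)"
  define cn where "cn = real (n - 2) / X"
  define cm where "cm = real (m - 2) / X"
  have cn0: "0 \<le> cn" and cm0: "0 \<le> cm" using X by (auto simp: cn_def cm_def)
  have F1e: "ext_extends k a X m (cutinf chi (a * X) Q1) F1"
    and gF1: "gT k m (cballn m X) F1 E1"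
    using compE[OF m0 X E1s] by (simp_all add: F1_def E1_def)
  have F2e: "ext_extends k a X n (cutinf chi (a * X) Q2) F2"
    and gF2: "gT k n (cballn n X) F2 E2"
    using compE[OF n0 X E2s] by (simp_all add: F2_def E2_def)
  have gA1: "gT k n (cballn n (2 * X)) (flat a n (cut0 chi (a * X) Q1)) (3 * I1)"
    unfolding I1_def by (rule compA[OF a X k m2 n1 I1s])
  have gB2: "gT k n (cballn n (2 * X)) (flat a n (cut0 chi (a * X) Q2)) (3 * I2)"
    unfolding I2_def by (rule compA[OF a X k n2 n1 I2s])
  have gK2: "gT k n (cballn n (2 * X)) (flat a n (cutinf chi (a * X) Q2)) ((1 + cn) * (3 * 1 * E2))"
    unfolding cn_def by (rule compK[OF a X k n chi1 F2e gF2])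
  have I1n: "0 \<le> I1" using gT_nonneg[OF gA1] by simp
  have I2n: "0 \<le> I2" using gT_nonneg[OF gB2] by simp
  have E1n: "0 \<le> E1" using gT_nonneg[OF gF1] by simp
  have E2n: "0 \<le> E2" using gT_nonneg[OF gF2] by simp

  have gInt0: "gT k n (cballn n (2 * X))
      (\<lambda>x. flat a n (cut0 chi (a * X) Q1) x * (flat a n (cut0 chi (a * X) Q2) x + flat a n (cutinf chi (a * X) Q2) x))
      (3 * I1 * (3 * I2 + (1 + cn) * (3 * 1 * E2)))"
    by (rule gT_mult[OF gA1 gT_add[OF gB2 gK2]])
  have gInt: "gT k n (cballn n (2 * X)) (flat a n (cut0 chi (a * X) ?P)) (3 * I1 * (3 * I2 + (1 + cn) * (3 * 1 * E2)))"
    by (rule gT_cong[OF gInt0])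
       (unfold flat_cut0[OF n1 a X] flat_cutinf[OF n1 a X] flat_mult, simp add: algebra_simps)
  have intC: "inC k n (2 * X) (flat a n (cut0 chi (a * X) ?P))"
    and intN: "normC k n (2 * X) (flat a n (cut0 chi (a * X) ?P)) \<le> 3 * I1 * (3 * I2 + (1 + cn) * (3 * 1 * E2))"
    using gT_to_inC[OF n0 X2 gInt] by auto
  have contK: "continuous_on ?S (\<lambda>(w, z). cutinf chi (a * X) Q2 w z)"
    by (rule cont_wz[OF a n2]) (use gT_cont[OF gK2] RA in simp)
  have cont1: "continuous_on ?S (\<lambda>(w, z). cut0 chi (a * X) Q1 w z)" using I1s by (simp add: int_space_def)
  have cont2: "continuous_on ?S (\<lambda>(w, z). cut0 chi (a * X) Q2 w z)" using I2s by (simp add: int_space_def)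
  have contP: "continuous_on ?S (\<lambda>(w, z). cut0 chi (a * X) ?P w z)"
  proof (rule continuous_on_eq)
    show "continuous_on ?S (\<lambda>p. (\<lambda>(w, z). cut0 chi (a * X) Q1 w z) p *
        ((\<lambda>(w, z). cut0 chi (a * X) Q2 w z) p + (\<lambda>(w, z). cutinf chi (a * X) Q2 w z) p))"
      by (intro continuous_on_mult continuous_on_add cont1 cont2 contK)
    fix p show "(\<lambda>(w, z). cut0 chi (a * X) Q1 w z) p *
        ((\<lambda>(w, z). cut0 chi (a * X) Q2 w z) p + (\<lambda>(w, z). cutinf chi (a * X) Q2 w z) p) =
        (\<lambda>(w, z). cut0 chi (a * X) ?P w z) p"
      by (cases p) (simp add: cut0_def cutinf_def algebra_simps)
  qed
  have rrm: "\<And>w z. rr w (-z) = rr w z" by (simp add: rr_def)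
  have intP: "int_space k a n ?R (cut0 chi (a * X) ?P)"
    unfolding int_space_def
  proof (intro conjI allI impI)
    fix w z assume "0 \<le> w \<and> rr w z \<le> ?R"
    then show "cut0 chi (a * X) ?P w (- z) = cut0 chi (a * X) ?P w z"
      by (simp add: cut0_def rrm ev1 ev2)
  next
    show "continuous_on ?S (\<lambda>(w, z). cut0 chi (a * X) ?P w z)" by (rule contP)
    show "inC k n (?R / a) (flat a n (cut0 chi (a * X) ?P))" using intC RA by simp
  qed
  have intPN: "int_norm k a n ?R (cut0 chi (a * X) ?P) \<le> 3 * I1 * (3 * I2 + (1 + cn) * (3 * 1 * E2))"
    using intN RA by (simp add: int_norm_def)

  define J where "J = (\<lambda>\<eta>. if enorm n \<eta> = 0 then 0 else flat a n (cut0 chi (a * X) Q1) (kinv X n \<eta>))"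
  define Gb where "Gb = (\<lambda>\<eta>. (enorm n \<eta> / X) ^ (m - 2) * F1 (proj n m \<eta>))"
  define G where "G = (\<lambda>\<eta>. (J \<eta> + Gb \<eta>) * F2 \<eta>)"
  have gJ: "gT k n (cballn n X) J (3 * 4 * (3 * I1))"
    unfolding J_def by (rule compJ[OF a X k n1 chi0 gA1])
  have gb: "gT k n (cballn n X) Gb ((1 + cm) * (3 * 1 * E1))"
    unfolding Gb_def cm_def by (rule compB[OF X k n1 m gF1])
  have gG: "gT k n (cballn n X) G ((3 * 4 * (3 * I1) + (1 + cm) * (3 * 1 * E1)) * E2)"
    unfolding G_def by (rule gT_mult[OF gT_add[OF gJ gb] gF2])
  have Gkel: "G \<eta> = kelvin X n (flat a n (cutinf chi (a * X) ?P)) \<eta>"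
    if et: "\<eta> \<in> cballn n X" and ne: "enorm n \<eta> \<noteq> 0" for \<eta>
  proof -
    define \<iota> where "\<iota> = kinv X n \<eta>"
    define c where "c = chi (enorm n \<iota> / X)"
    have pe: "enorm m (proj n m \<eta>) = enorm n \<eta>" by (rule enorm_proj[OF m2 n1])
    have pB: "proj n m \<eta> \<in> cballn m X" by (rule proj_in_cballn[OF m2 n1 et])
    have F2v: "F2 \<eta> = (X / enorm n \<eta>) ^ (n - 2) * flat a n (cutinf chi (a * X) Q2) \<iota>"
      using F2e et ne by (simp add: ext_extends_def kelvin_inv \<iota>_def)
    have F1v: "F1 (proj n m \<eta>) = (X / enorm n \<eta>) ^ (m - 2) * flat a m (cutinf chi (a * X) Q1) (kinv X m (proj n m \<eta>))"
      using F1e pB ne pe by (simp add: ext_extends_def kelvin_inv)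
    have cinf1: "flat a n (cutinf chi (a * X) Q1) \<iota> = flat a m (cutinf chi (a * X) Q1) (kinv X m (proj n m \<eta>))"
      unfolding \<iota>_def proj_inv[OF m2 n1, symmetric] by (rule flat_proj[OF m2, symmetric])
    have h2: "(enorm n \<eta> / X) * (X / enorm n \<eta>) = 1" using ne X by (simp add: field_simps)
    have hh: "(enorm n \<eta> / X) ^ (m - 2) * (X / enorm n \<eta>) ^ (m - 2) = 1"
      unfolding power_mult_distrib[symmetric] h2 by simp
    have Gbv: "Gb \<eta> = flat a n (cutinf chi (a * X) Q1) \<iota>"
      unfolding Gb_def F1v cinf1 mult.assoc[symmetric] hh by simp
    have Jv: "J \<eta> = flat a n (cut0 chi (a * X) Q1) \<iota>" using ne by (simp add: J_def \<iota>_def)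
    have sum1: "J \<eta> + Gb \<eta> = flat a n Q1 \<iota>"
      unfolding Jv Gbv flat_cut0[OF n1 a X] flat_cutinf[OF n1 a X] by (simp add: algebra_simps)
    have "kelvin X n (flat a n (cutinf chi (a * X) ?P)) \<eta>
        = (X / enorm n \<eta>) ^ (n - 2) * ((1 - c) * (flat a n Q1 \<iota> * flat a n Q2 \<iota>))"
      by (simp add: kelvin_inv flat_cutinf[OF n1 a X] flat_mult \<iota>_def c_def)
    also have "\<dots> = flat a n Q1 \<iota> * F2 \<eta>"
      unfolding F2v flat_cutinf[OF n1 a X] c_def by (simp add: algebra_simps)
    finally show ?thesis unfolding G_def sum1 by simp
  qed
  have GinC: "inC k n X G" and GN: "normC k n X G \<le> (3 * 4 * (3 * I1) + (1 + cm) * (3 * 1 * E1)) * E2"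
    using gT_to_inC[OF n0 X gG] by auto
  have Gext: "ext_extends k a X n (cutinf chi (a * X) ?P) G"
    unfolding ext_extends_def using GinC Gkel by blast
  have extP: "ext_space k a X n (cutinf chi (a * X) ?P)"
    unfolding ext_space_def using Gext ev1 ev2 by (auto simp: cutinf_def rrm)
  define F' where "F' = (SOME F. ext_extends k a X n (cutinf chi (a * X) ?P) F)"
  have F'e: "ext_extends k a X n (cutinf chi (a * X) ?P) F'"
    using compE(1)[OF n0 X extP] by (simp add: F'_def)
  have F'G: "F' \<eta> = G \<eta>" if "\<eta> \<in> cballn n X" for \<eta>
  proof (rule contn_agree0[OF n0 X _ _ _ that])
    show "contn_on n (cballn n X) F'" using F'e by (simp add: ext_extends_def inC_def)
    show "contn_on n (cballn n X) G" using GinC by (simp add: inC_def)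
    show "F' \<eta>' = G \<eta>'" if "\<eta>' \<in> cballn n X" "enorm n \<eta>' \<noteq> 0" for \<eta>'
      using F'e Gkel[OF that] that by (simp add: ext_extends_def)
  qed
  have gF': "gT k n (cballn n X) F' ((3 * 4 * (3 * I1) + (1 + cm) * (3 * 1 * E1)) * E2)"
    by (rule gT_cong[OF gG]) (simp add: F'G)
  have extPN: "ext_norm k a X n (cutinf chi (a * X) ?P) \<le> (3 * 4 * (3 * I1) + (1 + cm) * (3 * 1 * E1)) * E2"
    using gT_to_inC(2)[OF n0 X gF'] by (simp add: ext_norm_def F'_def)

  define g1 where "g1 = glob_norm k a X chi m Q1"
  define g2 where "g2 = glob_norm k a X chi n Q2"
  have g1I: "I1 \<le> g1" "E1 \<le> g1" by (auto simp: g1_def glob_norm_def I1_def E1_def)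
  have g2I: "I2 \<le> g2" "E2 \<le> g2" by (auto simp: g2_def glob_norm_def I2_def E2_def)
  have g1n: "0 \<le> g1" using I1n g1I by linarith
  have g2n: "0 \<le> g2" using I2n g2I by linarith
  have gg: "0 \<le> g1 * g2" using g1n g2n by simp
  have b1: "3 * I1 * (3 * I2 + (1 + cn) * (3 * 1 * E2)) \<le> CC n m X * g1 * g2"
  proof -
    have "3 * I1 * (3 * I2 + (1 + cn) * (3 * 1 * E2)) \<le> 3 * g1 * (3 * g2 + (1 + cn) * (3 * 1 * g2))"
      using g1I g2I I1n I2n E2n cn0 by (intro mult_mono add_mono mult_left_mono) auto
    also have "\<dots> = (3 * (3 + 3 * (1 + cn))) * (g1 * g2)" by (simp add: algebra_simps)
    also have "\<dots> \<le> CC n m X * (g1 * g2)"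
      using gg cm0 by (intro mult_right_mono) (auto simp: CC_def cn_def cm_def)
    finally show ?thesis by (simp add: mult.assoc)
  qed
  have b2: "(3 * 4 * (3 * I1) + (1 + cm) * (3 * 1 * E1)) * E2 \<le> CC n m X * g1 * g2"
  proof -
    have "(3 * 4 * (3 * I1) + (1 + cm) * (3 * 1 * E1)) * E2 \<le> (3 * 4 * (3 * g1) + (1 + cm) * (3 * 1 * g1)) * g2"
      using g1I g2I I1n E1n E2n cm0 g1n by (intro mult_mono add_mono mult_left_mono) auto
    also have "\<dots> = (36 + 3 * (1 + cm)) * (g1 * g2)" by (simp add: algebra_simps)
    also have "\<dots> \<le> CC n m X * (g1 * g2)"
      using gg cn0 by (intro mult_right_mono) (auto simp: CC_def cn_def cm_def)
    finally show ?thesis by (simp add: mult.assoc)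
  qed
  have evP: "\<forall>w z. w \<ge> 0 \<longrightarrow> ?P w (-z) = ?P w z" using ev1 ev2 by simp
  show ?thesis
  proof
    show "glob_space k a X chi n ?P" unfolding glob_space_def using evP intP extP by blast
    show "glob_norm k a X chi n ?P \<le> CC n m X * glob_norm k a X chi m Q1 * glob_norm k a X chi n Q2"
    proof -
      have "glob_norm k a X chi n ?P = max (int_norm k a n ?R (cut0 chi (a * X) ?P))
          (ext_norm k a X n (cutinf chi (a * X) ?P))" unfolding glob_norm_def ..
      also have "\<dots> \<le> CC n m X * g1 * g2" using intPN extPN b1 b2 by simp
      finally show ?thesis by (simp add: g1_def g2_def)
    qed
  qed
qed

theorem proposition8:
  fixes a \<Xi>0 \<alpha> :: real and chi :: "real \<Rightarrow> real" and n m :: nat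
  assumes "a > 0" and "\<Xi>0 > 0" and "0 < \<alpha>" and "\<alpha> < 1"
    and "cutoff chi" and "n \<ge> 3" and "m \<ge> 3"
  shows "\<exists>C. \<forall>Q1 Q2 :: real \<Rightarrow> real \<Rightarrow> real.
     (glob_space None a \<Xi>0 chi m Q1 \<and> glob_space None a \<Xi>0 chi n Q2 \<longrightarrow>
        glob_space None a \<Xi>0 chi n (\<lambda>w z. Q1 w z * Q2 w z) \<and>
        glob_norm None a \<Xi>0 chi n (\<lambda>w z. Q1 w z * Q2 w z)
          \<le> C * glob_norm None a \<Xi>0 chi m Q1 * glob_norm None a \<Xi>0 chi n Q2) \<and>
     (glob_space (Some \<alpha>) a \<Xi>0 chi m Q1 \<and> glob_space (Some \<alpha>) a \<Xi>0 chi n Q2 \<longrightarrow>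
        glob_space (Some \<alpha>) a \<Xi>0 chi n (\<lambda>w z. Q1 w z * Q2 w z) \<and>
        glob_norm (Some \<alpha>) a \<Xi>0 chi n (\<lambda>w z. Q1 w z * Q2 w z)
          \<le> C * glob_norm (Some \<alpha>) a \<Xi>0 chi m Q1 * glob_norm (Some \<alpha>) a \<Xi>0 chi n Q2)"
  proof -
  have chi1: "\<And>t. t \<le> 1 \<Longrightarrow> chi t = 1" and chi0: "\<And>t. 2 \<le> t \<Longrightarrow> chi t = 0"
    using assms(5) by (auto simp: cutoff_def)
  have kN: "kok None" by (simp add: kok_def)
  have kS: "kok (Some \<alpha>)" using assms(3,4) by (simp add: kok_def)
  show ?thesis
  proof (intro exI[of _ "CC n m \<Xi>0"] allI conjI impI)
    fix Q1 Q2 :: "real \<Rightarrow> real \<Rightarrow> real"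
    assume "glob_space None a \<Xi>0 chi m Q1 \<and> glob_space None a \<Xi>0 chi n Q2"
    then have h: "glob_space None a \<Xi>0 chi n (\<lambda>w z. Q1 w z * Q2 w z) \<and>
      glob_norm None a \<Xi>0 chi n (\<lambda>w z. Q1 w z * Q2 w z)
        \<le> CC n m \<Xi>0 * glob_norm None a \<Xi>0 chi m Q1 * glob_norm None a \<Xi>0 chi n Q2"
      using main[where chi=chi, OF assms(1,2) kN assms(6,7) chi1 chi0] by blast
    show "glob_space None a \<Xi>0 chi n (\<lambda>w z. Q1 w z * Q2 w z)" using h by blast
    show "glob_norm None a \<Xi>0 chi n (\<lambda>w z. Q1 w z * Q2 w z)
        \<le> CC n m \<Xi>0 * glob_norm None a \<Xi>0 chi m Q1 * glob_norm None a \<Xi>0 chi n Q2" using h by blast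
  next
    fix Q1 Q2 :: "real \<Rightarrow> real \<Rightarrow> real"
    assume "glob_space (Some \<alpha>) a \<Xi>0 chi m Q1 \<and> glob_space (Some \<alpha>) a \<Xi>0 chi n Q2"
    then have h: "glob_space (Some \<alpha>) a \<Xi>0 chi n (\<lambda>w z. Q1 w z * Q2 w z) \<and>
      glob_norm (Some \<alpha>) a \<Xi>0 chi n (\<lambda>w z. Q1 w z * Q2 w z)
        \<le> CC n m \<Xi>0 * glob_norm (Some \<alpha>) a \<Xi>0 chi m Q1 * glob_norm (Some \<alpha>) a \<Xi>0 chi n Q2"
      using main[where chi=chi, OF assms(1,2) kS assms(6,7) chi1 chi0] by blast
    show "glob_space (Some \<alpha>) a \<Xi>0 chi n (\<lambda>w z. Q1 w z * Q2 w z)" using h by blast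
    show "glob_norm (Some \<alpha>) a \<Xi>0 chi n (\<lambda>w z. Q1 w z * Q2 w z)
        \<le> CC n m \<Xi>0 * glob_norm (Some \<alpha>) a \<Xi>0 chi m Q1 * glob_norm (Some \<alpha>) a \<Xi>0 chi n Q2" using h by blast
  qed
qed

end
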